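(* Let $\beta>1$ be such that the generating sequence $g(\beta)$ is eventually periodic, let $(F_\beta,\mathcal{L}_\beta)$ be the right Fischer cover of the beta-shift $\mathsf{X}_\beta$, and let $\pi\colon \mathsf{X}_{F_\beta}\to\mathsf{X}_\beta$ be the covering map $\pi(x)=(\mathcal{L}_\beta(x_i))_{i\in\mathbb{Z}}$. If $g(\beta)$ is periodic, then $\pi$ is $1$ to $1$, and if $g(\beta)$ is not periodic, then $\pi$ is $2$ to $1$.
   Context: For $\beta>1$, let $e(\beta)$ be the $\beta$-expansion of $1$ (defined by $r_1=\{\beta\}$, $x_1=\lfloor\beta\rfloor$, $r_n=\{\beta r_{n-1}\}$, $x_n=\lfloor\beta r_{n-1}\rfloor$, $e(\beta)=x_1x_2\cdots$). The generating sequence is $g(\beta)=e(\beta)$ if $e(\beta)$ has infinitely many nonzero terms, and $g(\beta)=(a_1\cdots a_{k-1}(a_k-1))^\infty$ if $e(\beta)=a_1\cdots a_k00\cdots$ with $a_k\ne0$. The beta-shift $\mathsf{X}_\beta$ is the two-sided shift space over $\{0,\ldots,\lceil\beta\rceil-1\}$ whose language is the set of all finite words $x_n(t)\cdots x_m(t)$ of $\beta$-expansions of numbers $t\in[0,1]$; equivalently, a one-sided sequence $y_1y_2\cdots$ is a right-ray of $\mathsf{X}_\beta$ iff $y_ky_{k+1}\cdots\le g(\beta)$ lexicographically for all $k$. A sequence is periodic if $g_{i+p}=g_i$ for some $p\ge1$ and all $i\ge1$, eventually periodic if this holds for all $i\ge N$ for some $N$. When $g(\beta)$ is eventually periodic,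 $\mathsf{X}_\beta$ is sofic and its right Fischer cover is its unique minimal right-resolving follower-separated presentation by a finite labeled graph $(F_\beta,\mathcal{L}_\beta)$; $\mathsf{X}_{F_\beta}$ is the edge shift of the underlying graph. The factor map $\pi$ is called $1$ to $1$ if it is injective, and $2$ to $1$ if every point of $\mathsf{X}_\beta$ has at most two preimages and some point has exactly two. *)

theory Defs
  imports Complex_Main
begin

text \<open>Sequences are indexed from 0: index n here corresponds to index n+1 in the paper.\<close>

fun beta_r :: "real \<Rightarrow> nat \<Rightarrow> real" where
  "beta_r b 0 = frac b"
| "beta_r b (Suc n) = frac (b * beta_r b n)"

fun beta_e :: "real \<Rightarrow> nat \<Rightarrow> nat" where
  "beta_e b 0 = nat \<lfloor>b\<rfloor>"
| "beta_e b (Suc n) = nat \<lfloor>b * beta_r b n\<rfloor>"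

definition gen_seq :: "real \<Rightarrow> nat \<Rightarrow> nat" where
  "gen_seq b =
     (if infinite {n. beta_e b n \<noteq> 0} then beta_e b
      else (let K = Max {n. beta_e b n \<noteq> 0} in
            (\<lambda>n. if n mod Suc K = K then beta_e b K - 1 else beta_e b (n mod Suc K))))"

definition periodic_seq :: "(nat \<Rightarrow> nat) \<Rightarrow> bool" where
  "periodic_seq g \<longleftrightarrow> (\<exists>p\<ge>1. \<forall>i. g (i + p) = g i)"

definition eventually_periodic_seq :: "(nat \<Rightarrow> nat) \<Rightarrow> bool" where
  "eventually_periodic_seq g \<longleftrightarrow> (\<exists>p\<ge>1. \<exists>N. \<forall>i\<ge>N. g (i + p) = g i)"

definition lex_le :: "(nat \<Rightarrow> nat) \<Rightarrow> (nat \<Rightarrow> nat) \<Rightarrow> bool" where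
  "lex_le x y \<longleftrightarrow> x = y \<or> (\<exists>n. (\<forall>i<n. x i = y i) \<and> x n < y n)"

definition beta_shift :: "real \<Rightarrow> (int \<Rightarrow> nat) set" where
  "beta_shift b = {y. (\<forall>k. int (y k) < \<lceil>b\<rceil>) \<and>
                      (\<forall>k. lex_le (\<lambda>i. y (k + int i)) (gen_seq b))}"

record lgraph =
  verts :: "nat set"
  edges :: "nat set"
  src :: "nat \<Rightarrow> nat"
  tgt :: "nat \<Rightarrow> nat"
  lab :: "nat \<Rightarrow> nat"

definition finite_lgraph :: "lgraph \<Rightarrow> bool" where
  "finite_lgraph G \<longleftrightarrow> finite (verts G) \<and> finite (edges G) \<and>
     (\<forall>e\<in>edges G. src G e \<in> verts G \<and> tgt G e \<in> verts G)"

definition edge_shift :: "lgraph \<Rightarrow> (int \<Rightarrow> nat) set" where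
  "edge_shift G = {x. \<forall>i. x i \<in> edges G \<and> tgt G (x i) = src G (x (i + 1))}"

definition cover_map :: "lgraph \<Rightarrow> (int \<Rightarrow> nat) \<Rightarrow> (int \<Rightarrow> nat)" where
  "cover_map G x = (\<lambda>i. lab G (x i))"

definition presents :: "lgraph \<Rightarrow> (int \<Rightarrow> nat) set \<Rightarrow> bool" where
  "presents G X \<longleftrightarrow> finite_lgraph G \<and> cover_map G ` edge_shift G = X"

definition right_resolving :: "lgraph \<Rightarrow> bool" where
  "right_resolving G \<longleftrightarrow>
     (\<forall>e1\<in>edges G. \<forall>e2\<in>edges G. src G e1 = src G e2 \<and> lab G e1 = lab G e2 \<longrightarrow> e1 = e2)"

fun is_path_from :: "lgraph \<Rightarrow> nat \<Rightarrow> nat list \<Rightarrow> bool" where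
  "is_path_from G v [] = True"
| "is_path_from G v (e # es) \<longleftrightarrow> e \<in> edges G \<and> src G e = v \<and> is_path_from G (tgt G e) es"

definition follower_set :: "lgraph \<Rightarrow> nat \<Rightarrow> nat list set" where
  "follower_set G v = {map (lab G) p | p. is_path_from G v p}"

definition follower_separated :: "lgraph \<Rightarrow> bool" where
  "follower_separated G \<longleftrightarrow>
     (\<forall>u\<in>verts G. \<forall>v\<in>verts G. follower_set G u = follower_set G v \<longrightarrow> u = v)"

definition right_fischer_cover :: "(int \<Rightarrow> nat) set \<Rightarrow> lgraph \<Rightarrow> bool" where
  "right_fischer_cover X G \<longleftrightarrow>
     presents G X \<and> right_resolving G \<and> follower_separated G \<and>
     (\<forall>H. presents H X \<and> right_resolving H \<longrightarrow> card (verts G) \<le> card (verts H))"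

definition one_to_one :: "lgraph \<Rightarrow> bool" where
  "one_to_one G \<longleftrightarrow> inj_on (cover_map G) (edge_shift G)"

definition two_to_one :: "lgraph \<Rightarrow> (int \<Rightarrow> nat) set \<Rightarrow> bool" where
  "two_to_one G X \<longleftrightarrow>
     (\<forall>y\<in>X. finite {x\<in>edge_shift G. cover_map G x = y} \<and>
             card {x\<in>edge_shift G. cover_map G x = y} \<le> 2) \<and>
     (\<exists>y\<in>X. card {x\<in>edge_shift G. cover_map G x = y} = 2)"

end

theory Submission
  imports Defs
begin

definition shf :: "nat \<Rightarrow> (nat \<Rightarrow> nat) \<Rightarrow> nat \<Rightarrow> nat" where
  "shf n s = (\<lambda>i. s (n + i))"

lemma shf_0[simp]: "shf 0 s = s" by (simp add: shf_def)
lemma shf_shf[simp]: "shf m (shf n s) = shf (n + m) s" by (simp add: shf_def add.assoc)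
lemma shf_app[simp]: "shf n s i = s (n + i)" by (simp add: shf_def)

fun wle :: "nat list \<Rightarrow> (nat \<Rightarrow> nat) \<Rightarrow> bool" where
  "wle [] s = True"
| "wle (c # u) s = (c < s 0 \<or> (c = s 0 \<and> wle u (shf 1 s)))"

fun adm :: "(nat \<Rightarrow> nat) \<Rightarrow> nat list \<Rightarrow> bool" where
  "adm g [] = True"
| "adm g (c # u) = (wle (c # u) g \<and> adm g u)"

lemma lex_le_refl[simp]: "lex_le s s" by (simp add: lex_le_def)

lemma lex_le_Cons:
  "lex_le s t \<longleftrightarrow> s 0 < t 0 \<or> (s 0 = t 0 \<and> lex_le (shf 1 s) (shf 1 t))"
proof
  assume "lex_le s t"
  then consider "s = t" | n where "\<forall>i<n. s i = t i" "s n < t n" unfolding lex_le_def by blast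
  then show "s 0 < t 0 \<or> (s 0 = t 0 \<and> lex_le (shf 1 s) (shf 1 t))"
  proof cases
    case 1 then show ?thesis by simp
  next
    case 2
    show ?thesis
    proof (cases n)
      case 0 with 2 show ?thesis by simp
    next
      case (Suc m)
      with 2 have "s 0 = t 0" by auto
      moreover have "lex_le (shf 1 s) (shf 1 t)" unfolding lex_le_def
        using 2 Suc by (intro disjI2 exI[of _ m]) auto
      ultimately show ?thesis by simp
    qed
  qed
next
  assume "s 0 < t 0 \<or> (s 0 = t 0 \<and> lex_le (shf 1 s) (shf 1 t))"
  then consider "s 0 < t 0" | "s 0 = t 0" "lex_le (shf 1 s) (shf 1 t)" by blast
  then show "lex_le s t"
  proof cases
    case 1 then show ?thesis unfolding lex_le_def by (intro disjI2 exI[of _ 0]) auto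
  next
    case 2
    from 2(2) consider "shf 1 s = shf 1 t" | n where "\<forall>i<n. s (1+i) = t (1+i)" "s (1+n) < t (1+n)"
      unfolding lex_le_def by auto
    then show ?thesis
    proof cases
      case 1
      have "s = t"
      proof
        fix i show "s i = t i"
          using 2(1) fun_cong[OF 1, of "i - 1"] by (cases i) auto
      qed
      then show ?thesis by simp
    next
      case 3: 2
      show ?thesis unfolding lex_le_def
      proof (intro disjI2 exI[of _ "Suc n"] conjI allI impI)
        fix i assume "i < Suc n" then show "s i = t i"
          using 2(1) 3(1) by (cases i) auto
      qed (use 3 in auto)
    qed
  qed
qed

lemma lex_le_zero: "lex_le (\<lambda>_. 0) s"
proof (cases "\<forall>i. s i = 0")
  case True then have "s = (\<lambda>_. 0)" by auto
  then show ?thesis by simp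
next
  case False
  define n where "n = (LEAST i. s i \<noteq> 0)"
  have "s n \<noteq> 0" using False unfolding n_def by (metis (mono_tags) LeastI)
  moreover have "\<forall>i<n. s i = 0" unfolding n_def using not_less_Least by blast
  ultimately show ?thesis unfolding lex_le_def by (intro disjI2 exI[of _ n]) auto
qed

lemma lex_le_trans: "lex_le s t \<Longrightarrow> lex_le t r \<Longrightarrow> lex_le s r"
proof -
  assume a: "lex_le s t" "lex_le t r"
  show ?thesis
  proof (cases "s = t \<or> t = r")
    case True with a show ?thesis by auto
  next
    case False
    with a obtain n m where n: "\<forall>i<n. s i = t i" "s n < t n" and m: "\<forall>i<m. t i = r i" "t m < r m"
      unfolding lex_le_def by blast
    consider "n < m" | "n = m" | "m < n" by linarith
    then show ?thesis
    proof cases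
      case 1
      have "\<forall>i<n. s i = r i" using n(1) m(1) 1 by simp
      moreover have "s n < r n" using n(2) m(1) 1 by simp
      ultimately show ?thesis unfolding lex_le_def by blast
    next
      case 2
      have "\<forall>i<n. s i = r i" using n(1) m(1) 2 by simp
      moreover have "s n < r n" using n(2) m(2) 2 by simp
      ultimately show ?thesis unfolding lex_le_def by blast
    next
      case 3
      have "\<forall>i<m. s i = r i" using n(1) m(1) 3 by simp
      moreover have "s m < r m" using n(1) m(2) 3 by simp
      ultimately show ?thesis unfolding lex_le_def by blast
    qed
  qed
qed

lemma lex_le_antisym: "lex_le s t \<Longrightarrow> lex_le t s \<Longrightarrow> s = t"
proof (rule ccontr)
  assume a: "lex_le s t" "lex_le t s" "s \<noteq> t"
  then obtain n m where n: "\<forall>i<n. s i = t i" "s n < t n" and m: "\<forall>i<m. t i = s i" "t m < s m"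
    unfolding lex_le_def by blast
  consider "n < m" | "n = m" | "m < n" by linarith
  then show False
  proof cases
    case 1 then show False using n(2) m(1) by (metis less_not_sym)
  next
    case 2 then show False using n(2) m(2) by simp
  next
    case 3 then show False using n(1) m(2) by (metis less_not_sym)
  qed
qed

lemma wle_iff:
  "wle u t \<longleftrightarrow> (\<forall>i<length u. u ! i = t i) \<or> (\<exists>j<length u. (\<forall>i<j. u ! i = t i) \<and> u ! j < t j)"
proof (induction u arbitrary: t)
  case Nil then show ?case by simp
next
  case (Cons c u)
  show ?case
  proof
    assume "wle (c # u) t"
    then consider "c < t 0" | "c = t 0" "wle u (shf 1 t)" by auto
    then show "(\<forall>i<length (c#u). (c#u) ! i = t i) \<or> (\<exists>j<length (c#u). (\<forall>i<j. (c#u) ! i = t i) \<and> (c#u) ! j < t j)"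
    proof cases
      case 1 then show ?thesis by (intro disjI2 exI[of _ 0]) auto
    next
      case 2
      from 2(2)[unfolded Cons.IH] show ?thesis
      proof
        assume h: "\<forall>i<length u. u ! i = shf 1 t i"
        have "\<forall>i<length (c#u). (c#u) ! i = t i"
        proof (intro allI impI)
          fix i assume "i < length (c#u)" then show "(c#u) ! i = t i" using h 2(1) by (cases i) auto
        qed
        then show ?thesis by blast
      next
        assume "\<exists>j<length u. (\<forall>i<j. u ! i = shf 1 t i) \<and> u ! j < shf 1 t j"
        then obtain j where j: "j < length u" "\<forall>i<j. u ! i = shf 1 t i" "u ! j < shf 1 t j" by blast
        have "\<forall>i<Suc j. (c#u) ! i = t i"
        proof (intro allI impI)
          fix i assume "i < Suc j" then show "(c#u) ! i = t i" using j 2(1) by (cases i) auto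
        qed
        then show ?thesis using j by (intro disjI2 exI[of _ "Suc j"]) auto
      qed
    qed
  next
    assume h: "(\<forall>i<length (c#u). (c#u) ! i = t i) \<or> (\<exists>j<length (c#u). (\<forall>i<j. (c#u) ! i = t i) \<and> (c#u) ! j < t j)"
    show "wle (c # u) t"
    proof (cases "c < t 0")
      case True then show ?thesis by simp
    next
      case False
      from h have c: "c = t 0"
      proof
        assume "\<forall>i<length (c#u). (c#u) ! i = t i" then show ?thesis by (metis length_Cons nth_Cons_0 zero_less_Suc)
      next
        assume "\<exists>j<length (c#u). (\<forall>i<j. (c#u) ! i = t i) \<and> (c#u) ! j < t j"
        then obtain j where "j<length (c#u)" "\<forall>i<j. (c#u) ! i = t i" "(c#u) ! j < t j" by blast
        then show ?thesis using False by (cases j) auto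
      qed
      have "wle u (shf 1 t)" unfolding Cons.IH
      using h proof
        assume "\<forall>i<length (c#u). (c#u) ! i = t i"
        then have "\<forall>i<length u. u ! i = shf 1 t i" by (metis Suc_less_eq length_Cons nth_Cons_Suc plus_1_eq_Suc shf_app)
        then show "(\<forall>i<length u. u ! i = shf 1 t i) \<or> (\<exists>j<length u. (\<forall>i<j. u ! i = shf 1 t i) \<and> u ! j < shf 1 t j)" by blast
      next
        assume "\<exists>j<length (c#u). (\<forall>i<j. (c#u) ! i = t i) \<and> (c#u) ! j < t j"
        then obtain j where j: "j<length (c#u)" "\<forall>i<j. (c#u) ! i = t i" "(c#u) ! j < t j" by blast
        then obtain j' where j': "j = Suc j'" using False c by (cases j) auto
        have "\<forall>i<j'. u ! i = shf 1 t i"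
        proof (intro allI impI)
          fix i assume "i < j'" then show "u ! i = shf 1 t i" using j(2)[rule_format, of "Suc i"] j' by simp
        qed
        then show "(\<forall>i<length u. u ! i = shf 1 t i) \<or> (\<exists>j<length u. (\<forall>i<j. u ! i = shf 1 t i) \<and> u ! j < shf 1 t j)"
          using j j' by (intro disjI2 exI[of _ j']) auto
      qed
      with c show ?thesis by simp
    qed
  qed
qed

lemma wle_map_lex: assumes "lex_le s t" shows "wle (map s [0..<k]) t"
proof -
  from assms consider "s = t" | n where "\<forall>i<n. s i = t i" "s n < t n" unfolding lex_le_def by blast
  then show ?thesis
  proof cases
    case 1 then show ?thesis unfolding wle_iff by auto
  next
    case 2
    show ?thesis
    proof (cases "n < k")
      case True then show ?thesis unfolding wle_iff using 2 by (intro disjI2 exI[of _ n]) auto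
    next
      case False then show ?thesis unfolding wle_iff using 2 by (intro disjI1) auto
    qed
  qed
qed

lemma map_lex_wle: assumes "\<And>k. wle (map s [0..<k]) t" shows "lex_le s t"
proof (cases "s = t")
  case True then show ?thesis by simp
next
  case False
  then have ex: "\<exists>i. s i \<noteq> t i" by auto
  define n where "n = (LEAST i. s i \<noteq> t i)"
  have d: "s n \<noteq> t n" using ex unfolding n_def by (metis (mono_tags) LeastI)
  have b: "\<forall>i<n. s i = t i" unfolding n_def using not_less_Least by blast
  have "s n < t n"
  proof -
    have nth: "\<And>i. i < Suc n \<Longrightarrow> map s [0..<Suc n] ! i = s i" by (simp del: upt_Suc)
    from assms[of "Suc n", unfolded wle_iff] show ?thesis
    proof
      assume "\<forall>i<length (map s [0..<Suc n]). map s [0..<Suc n] ! i = t i"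
      then have "s n = t n" using nth[of n] by simp
      with d show ?thesis by simp
    next
      assume "\<exists>j<length (map s [0..<Suc n]). (\<forall>i<j. map s [0..<Suc n] ! i = t i) \<and> map s [0..<Suc n] ! j < t j"
      then obtain j where j: "j < Suc n" "map s [0..<Suc n] ! j < t j" by auto
      then have "s j < t j" using nth by simp
      moreover have "j = n" using j b \<open>s j < t j\<close> by (metis less_SucE less_irrefl)
      ultimately show ?thesis by simp
    qed
  qed
  then show ?thesis unfolding lex_le_def using b by blast
qed

lemma wle_trans: "wle u s \<Longrightarrow> lex_le s t \<Longrightarrow> wle u t"
proof (induction u arbitrary: s t)
  case Nil then show ?case by simp
next
  case (Cons c u)
  from lex_le_Cons[THEN iffD1, OF Cons.prems(2)] consider "s 0 < t 0" | "s 0 = t 0" "lex_le (shf 1 s) (shf 1 t)" by blast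
  then show ?case
  proof cases
    case 1 with Cons.prems(1) show ?thesis by auto
  next
    case 2
    from Cons.prems(1) consider "c < s 0" | "c = s 0" "wle u (shf 1 s)" by auto
    then show ?thesis
    proof cases
      case 1 with 2 show ?thesis by simp
    next
      case 3: 2
      have "wle u (shf 1 t)" using Cons.IH[OF 3(2) 2(2)] .
      with 2 3 show ?thesis by simp
    qed
  qed
qed

lemma wle_append: "wle (u @ v) s \<Longrightarrow> wle u s"
  by (induction u arbitrary: s) auto

lemma adm_append: "adm g (u @ v) \<Longrightarrow> adm g u"
  by (induction u) (auto dest: wle_append)

lemma adm_wle: "adm g u \<Longrightarrow> wle u g"
  by (cases u) auto

lemma adm_drop: "adm g u \<Longrightarrow> wle (drop j u) g"
proof (induction u arbitrary: j)
  case Nil then show ?case by simp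
next
  case (Cons c u)
  show ?case
  proof (cases j)
    case 0 then show ?thesis using Cons.prems by (simp del: wle.simps add: adm_wle)
  next
    case (Suc k)
    have "adm g u" using Cons.prems by simp
    then show ?thesis using Cons.IH Suc by simp
  qed
qed

definition zext :: "nat list \<Rightarrow> nat \<Rightarrow> nat" where
  "zext w = (\<lambda>i. if i < length w then w ! i else 0)"

lemma wle_zext: "wle w s \<Longrightarrow> lex_le (zext w) s"
proof (induction w arbitrary: s)
  case Nil then show ?case by (simp add: zext_def lex_le_zero)
next
  case (Cons c w)
  have h1: "shf 1 (zext (c # w)) = zext w" unfolding fun_eq_iff zext_def shf_def by simp
  have h2: "zext (c # w) 0 = c" by (simp add: zext_def)
  have e: "lex_le (zext (c#w)) s \<longleftrightarrow> c < s 0 \<or> (c = s 0 \<and> lex_le (zext w) (shf 1 s))"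
    using lex_le_Cons[of "zext (c#w)" s] unfolding h1 h2 .
  from Cons.prems consider "c < s 0" | "c = s 0" "wle w (shf 1 s)" by auto
  then show ?case
  proof cases
    case 1 then show ?thesis using e by blast
  next
    case 2 then show ?thesis using e Cons.IH[OF 2(2)] by blast
  qed
qed


fun pend :: "lgraph \<Rightarrow> nat \<Rightarrow> nat list \<Rightarrow> nat" where
  "pend G v [] = v"
| "pend G v (e # es) = pend G (tgt G e) es"

lemma path_append: "is_path_from G v (p @ q) \<longleftrightarrow> is_path_from G v p \<and> is_path_from G (pend G v p) q"
  by (induction p arbitrary: v) auto

lemma pend_append: "pend G v (p @ q) = pend G (pend G v p) q"
  by (induction p arbitrary: v) auto

lemma pend_verts: "finite_lgraph G \<Longrightarrow> v \<in> verts G \<Longrightarrow> is_path_from G v p \<Longrightarrow> pend G v p \<in> verts G"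
  by (induction p arbitrary: v) (auto simp: finite_lgraph_def)

lemma path_unique: "right_resolving G \<Longrightarrow> is_path_from G v p \<Longrightarrow> is_path_from G v q \<Longrightarrow>
    map (lab G) p = map (lab G) q \<Longrightarrow> p = q"
proof (induction p arbitrary: v q)
  case Nil then show ?case by simp
next
  case (Cons e p)
  then obtain e' q' where q: "q = e' # q'" by (cases q) auto
  have "e = e'" using Cons.prems unfolding q right_resolving_def by auto
  have "is_path_from G (tgt G e) p" "is_path_from G (tgt G e) q'" "map (lab G) p = map (lab G) q'"
    using Cons.prems \<open>e = e'\<close> unfolding q by auto
  then have "p = q'" by (rule Cons.IH[OF Cons.prems(1)])
  then show ?case using \<open>e = e'\<close> q by simp
qed

lemma F_mem: "w \<in> follower_set G v \<longleftrightarrow> (\<exists>p. is_path_from G v p \<and> w = map (lab G) p)"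
  unfolding follower_set_def by blast

lemma F_nil[simp]: "[] \<in> follower_set G v"
  unfolding follower_set_def by (auto intro: exI[of _ "[]"])

lemma F_single: "[c] \<in> follower_set G v \<longleftrightarrow> (\<exists>e\<in>edges G. src G e = v \<and> lab G e = c)"
proof
  assume "[c] \<in> follower_set G v"
  then obtain p where "is_path_from G v p" "[c] = map (lab G) p" unfolding F_mem by metis
  then show "\<exists>e\<in>edges G. src G e = v \<and> lab G e = c" by (cases p) auto
next
  assume "\<exists>e\<in>edges G. src G e = v \<and> lab G e = c"
  then obtain e where "e \<in> edges G" "src G e = v" "lab G e = c" by blast
  then have "is_path_from G v [e]" "[c] = map (lab G) [e]" by auto
  then show "[c] \<in> follower_set G v" unfolding follower_set_def mem_Collect_eq
    by (intro exI[of _ "[e]"]) simp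
qed

lemma Fderiv: assumes "right_resolving G" "e \<in> edges G"
  shows "follower_set G (tgt G e) = {u. lab G e # u \<in> follower_set G (src G e)}"
proof (intro set_eqI iffI; simp)
  fix u assume "u \<in> follower_set G (tgt G e)"
  then obtain q where "is_path_from G (tgt G e) q" "u = map (lab G) q" unfolding F_mem by metis
  then have "is_path_from G (src G e) (e # q)" "lab G e # u = map (lab G) (e # q)" using assms by auto
  then show "lab G e # u \<in> follower_set G (src G e)" unfolding follower_set_def mem_Collect_eq
    by (intro exI[of _ "e # q"]) simp
next
  fix u assume "lab G e # u \<in> follower_set G (src G e)"
  then obtain p where p: "is_path_from G (src G e) p" "lab G e # u = map (lab G) p" unfolding F_mem by metis
  then obtain e' q where pq: "p = e' # q" by (cases p) auto
  with p have "e' = e" using assms unfolding right_resolving_def by auto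
  with p pq show "u \<in> follower_set G (tgt G e)" unfolding F_mem by auto
qed

lemma Fpath: assumes "right_resolving G" shows "is_path_from G v p \<Longrightarrow>
   follower_set G (pend G v p) = {u. map (lab G) p @ u \<in> follower_set G v}"
proof (induction p arbitrary: v)
  case Nil then show ?case by simp
next
  case (Cons e p)
  then have e: "e \<in> edges G" "src G e = v" "is_path_from G (tgt G e) p" by auto
  have "follower_set G (pend G v (e # p)) = {u. map (lab G) p @ u \<in> follower_set G (tgt G e)}"
    using Cons.IH[OF e(3)] by simp
  also have "\<dots> = {u. map (lab G) (e # p) @ u \<in> follower_set G v}"
    using Fderiv[OF assms e(1)] e(2) by simp
  finally show ?case .
qed

definition win :: "(int \<Rightarrow> nat) \<Rightarrow> int \<Rightarrow> nat \<Rightarrow> nat list" where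
  "win y k n = map (\<lambda>i. y (k + int i)) [0..<n]"

lemma win_Suc: "win y k (Suc n) = y k # win y (k + 1) n"
  unfolding win_def map_upt_Suc by (simp add: ac_simps)

lemma win_Suc_right: "win y k (Suc n) = win y k n @ [y (k + int n)]"
  unfolding win_def by simp

lemma length_win[simp]: "length (win y k n) = n" by (simp add: win_def)

definition ray :: "(int \<Rightarrow> nat) \<Rightarrow> int \<Rightarrow> nat \<Rightarrow> nat" where
  "ray y k = (\<lambda>i. y (k + int i))"

lemma win_ray: "win y k n = map (ray y k) [0..<n]" by (simp add: win_def ray_def)

lemma es_path: assumes "x \<in> edge_shift G"
  shows "is_path_from G (src G (x k)) (win x k n) \<and> pend G (src G (x k)) (win x k n) = src G (x (k + int n))"
proof (induction n arbitrary: k)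
  case 0 then show ?case by (simp add: win_def)
next
  case (Suc n)
  have "x k \<in> edges G" "tgt G (x k) = src G (x (k + 1))" using assms unfolding edge_shift_def by auto
  with Suc.IH[of "k+1"] show ?case by (simp add: win_Suc add.assoc)
qed

lemma cover_win: "map (lab G) (win x k n) = win (cover_map G x) k n"
  by (simp add: win_def cover_map_def)

locale bsh =
  fixes g :: "nat \<Rightarrow> nat" and G :: lgraph and X :: "(int \<Rightarrow> nat) set"
  assumes parry: "\<And>m. lex_le (shf m g) g"
    and nz: "\<And>n. \<exists>j\<ge>n. 0 < g j"
    and evp: "eventually_periodic_seq g"
    and Xdef: "X = {y. \<forall>k. lex_le (ray y k) g}"
    and fc: "right_fischer_cover X G"
begin

lemma g_le_g0: "g n \<le> g 0"
  using lex_le_Cons[THEN iffD1, OF parry[of n]] by auto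

lemma g0pos: "0 < g 0"
  using nz[of 0] g_le_g0 by (meson less_le_trans)

definition Lang :: "nat list set" where
  "Lang = {u. \<exists>y\<in>X. \<exists>k n. u = win y k n}"

definition pt :: "nat list \<Rightarrow> int \<Rightarrow> nat" where
  "pt u = (\<lambda>k. if 0 \<le> k \<and> k < int (length u) then u ! nat k else 0)"

lemma pt_in: assumes "adm g u" shows "pt u \<in> X"
proof -
  have "lex_le (ray (pt u) k) g" for k
  proof (cases "k < 0")
    case True
    then have "ray (pt u) k 0 = 0" by (simp add: ray_def pt_def)
    then show ?thesis using g0pos lex_le_Cons[of "ray (pt u) k" g] by simp
  next
    case False
    have "ray (pt u) k = zext (drop (nat k) u)"
    proof
      fix i
      obtain m where m: "k = int m" using False by (metis nonneg_int_cases not_less)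
      have "ray (pt u) k i = (if m + i < length u then u ! (m + i) else 0)"
        unfolding ray_def pt_def m by (simp add: nat_int_add)
      also have "\<dots> = zext (drop (nat k) u) i"
        unfolding zext_def m by (simp add: less_diff_conv add.commute)
      finally show "ray (pt u) k i = zext (drop (nat k) u) i" .
    qed
    then show ?thesis using wle_zext[OF adm_drop[OF assms]] by simp
  qed
  then show ?thesis unfolding Xdef by simp
qed

lemma adm_win: assumes "y \<in> X" shows "adm g (win y k n)"
proof (induction n arbitrary: k)
  case 0 then show ?case by (simp add: win_def)
next
  case (Suc n)
  have "lex_le (ray y k) g" using assms unfolding Xdef by simp
  then have "wle (win y k (Suc n)) g" unfolding win_ray by (rule wle_map_lex)
  then show ?case using Suc.IH[of "k+1"] unfolding win_Suc by simp
qed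

lemma win_pt: "win (pt u) 0 (length u) = u"
  unfolding win_def pt_def by (rule nth_equalityI) auto

lemma Lang_iff: "u \<in> Lang \<longleftrightarrow> adm g u"
proof
  assume "u \<in> Lang"
  then obtain y k n where "y \<in> X" "u = win y k n" unfolding Lang_def by blast
  then show "adm g u" using adm_win by simp
next
  assume a: "adm g u"
  have "\<exists>y\<in>X. \<exists>k n. u = win y k n"
    using pt_in[OF a] win_pt[of u] by metis
  then show "u \<in> Lang" unfolding Lang_def by simp
qed

lemma Lang_adm: "Lang = {u. adm g u}"
  using Lang_iff by auto

lemma win_Lang: "y \<in> X \<Longrightarrow> win y k n \<in> Lang"
  unfolding Lang_adm by (simp add: adm_win)

definition C :: "nat \<Rightarrow> nat list set" where
  "C n = {u. adm g u \<and> wle u (shf n g)}"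

lemma C0: "C 0 = Lang"
  unfolding C_def Lang_adm by (auto simp: adm_wle)

lemma C_sub: "C n \<subseteq> C 0"
  unfolding C_def by (auto simp: adm_wle)

lemma deriv_C: "{u. c # u \<in> C n} = (if c = g n then C (Suc n) else if c < g n then C 0 else {})"
proof -
  have mem: "c # u \<in> C n \<longleftrightarrow> wle (c # u) g \<and> adm g u \<and> (c < g n \<or> (c = g n \<and> wle u (shf (Suc n) g)))" for u
    unfolding C_def by simp
  have key: "wle (g n # u) g" if "wle u (shf (Suc n) g)" for u
  proof -
    from lex_le_Cons[THEN iffD1, OF parry[of n]]
    have "g n < g 0 \<or> (g n = g 0 \<and> lex_le (shf (Suc n) g) (shf 1 g))" by simp
    then show ?thesis
    proof
      assume "g n < g 0" then show ?thesis by simp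
    next
      assume h: "g n = g 0 \<and> lex_le (shf (Suc n) g) (shf 1 g)"
      then have "wle u (shf 1 g)" using wle_trans that by blast
      with h show ?thesis by simp
    qed
  qed
  show ?thesis
  proof (cases "c = g n")
    case True
    have "{u. c # u \<in> C n} = C (Suc n)"
    proof (intro set_eqI iffI)
      fix u assume "u \<in> {u. c # u \<in> C n}"
      then have "adm g u" "wle u (shf (Suc n) g)" using mem[of u] True by auto
      then show "u \<in> C (Suc n)" unfolding C_def by simp
    next
      fix u assume "u \<in> C (Suc n)"
      then have h: "adm g u" "wle u (shf (Suc n) g)" unfolding C_def by auto
      have "wle (c # u) g" using key[OF h(2)] True by simp
      then show "u \<in> {u. c # u \<in> C n}" using mem[of u] h True by simp
    qed
    with True show ?thesis by simp
  next
    case False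
    show ?thesis
    proof (cases "c < g n")
      case True
      then have "c < g 0" using g_le_g0[of n] by simp
      have "{u. c # u \<in> C n} = C 0"
      proof (intro set_eqI iffI)
        fix u assume "u \<in> {u. c # u \<in> C n}"
        then have "adm g u" using mem[of u] by auto
        then show "u \<in> C 0" unfolding C_def by (simp add: adm_wle)
      next
        fix u assume "u \<in> C 0"
        then have h: "adm g u" unfolding C_def by auto
        have "wle (c # u) g" using \<open>c < g 0\<close> by simp
        then show "u \<in> {u. c # u \<in> C n}" using mem[of u] h True by simp
      qed
      with True False show ?thesis by simp
    next
      case F2: False
      have "{u. c # u \<in> C n} = {}" using mem False F2 by auto
      with False F2 show ?thesis by simp
    qed
  qed
qed

definition FX :: "nat list \<Rightarrow> nat list set" where
  "FX w = {u. w @ u \<in> Lang}"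

lemma FX_C: "w \<in> Lang \<Longrightarrow> \<exists>n. FX w = C n"
proof (induction w rule: rev_induct)
  case Nil then show ?case by (auto simp: FX_def C0 intro: exI[of _ 0])
next
  case (snoc c w)
  have "w \<in> Lang" using snoc.prems unfolding Lang_adm by (auto dest: adm_append)
  then obtain n where n: "FX w = C n" using snoc.IH by blast
  have e: "FX (w @ [c]) = {u. c # u \<in> C n}" unfolding n[symmetric] FX_def by simp
  have "[] \<in> FX (w @ [c])" using snoc.prems unfolding FX_def by simp
  then have ne: "{u. c # u \<in> C n} \<noteq> {}" unfolding e by blast
  show ?case
  proof (cases "c = g n")
    case True then show ?thesis unfolding e deriv_C by auto
  next
    case False
    then show ?thesis using ne unfolding e deriv_C by (cases "c < g n") auto
  qed
qed

end

lemma path_nth: "is_path_from G v p \<Longrightarrow> k < length p \<Longrightarrow>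
   p ! k \<in> edges G \<and> src G (p ! k) = pend G v (take k p) \<and> tgt G (p ! k) = pend G v (take (Suc k) p)"
proof (induction p arbitrary: v k)
  case Nil then show ?case by simp
next
  case (Cons e p)
  show ?case
  proof (cases k)
    case 0 then show ?thesis using Cons.prems by simp
  next
    case (Suc k')
    then have "k' < length p" using Cons.prems by simp
    moreover have "is_path_from G (tgt G e) p" using Cons.prems by simp
    ultimately show ?thesis using Cons.IH Suc by simp
  qed
qed

context bsh
begin

abbreviation F where "F \<equiv> follower_set G"

lemma fin: "finite_lgraph G" and pres: "cover_map G ` edge_shift G = X"
  and rr: "right_resolving G" and fs: "follower_separated G"
  and minimal: "\<And>H. presents H X \<Longrightarrow> right_resolving H \<Longrightarrow> card (verts G) \<le> card (verts H)"
  using fc unfolding right_fischer_cover_def presents_def by auto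

lemma finV: "finite (verts G)" using fin unfolding finite_lgraph_def by simp

lemma es_edge: "x \<in> edge_shift G \<Longrightarrow> x i \<in> edges G \<and> tgt G (x i) = src G (x (i + 1))"
  unfolding edge_shift_def by auto

lemma src_verts: "e \<in> edges G \<Longrightarrow> src G e \<in> verts G \<and> tgt G e \<in> verts G"
  using fin unfolding finite_lgraph_def by auto

lemma F_eq: "u \<in> verts G \<Longrightarrow> v \<in> verts G \<Longrightarrow> F u = F v \<Longrightarrow> u = v"
  using fs unfolding follower_separated_def by auto

lemma rr_eq: "e \<in> edges G \<Longrightarrow> e' \<in> edges G \<Longrightarrow> src G e = src G e' \<Longrightarrow> lab G e = lab G e' \<Longrightarrow> e = e'"
  using rr unfolding right_resolving_def by auto

lemma essential: assumes "v \<in> verts G" shows "\<exists>x\<in>edge_shift G. \<exists>i. src G (x i) = v"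
proof -
  define E where "E = {v. \<exists>x\<in>edge_shift G. \<exists>i. src G (x i) = v}"
  define H where "H = G\<lparr>verts := E, edges := {e \<in> edges G. src G e \<in> E \<and> tgt G e \<in> E}\<rparr>"
  have EV: "E \<subseteq> verts G" unfolding E_def using es_edge src_verts by blast
  have esH: "edge_shift H = edge_shift G"
  proof (intro set_eqI iffI)
    fix x assume "x \<in> edge_shift H" then show "x \<in> edge_shift G" unfolding edge_shift_def H_def by simp
  next
    fix x assume x: "x \<in> edge_shift G"
    have "\<forall>i. x i \<in> edges H \<and> tgt H (x i) = src H (x (i + 1))"
    proof
      fix i
      have "src G (x i) \<in> E" "src G (x (i+1)) \<in> E" unfolding E_def using x by blast+
      then show "x i \<in> edges H \<and> tgt H (x i) = src H (x (i + 1))"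
        using es_edge[OF x, of i] unfolding H_def by simp
    qed
    then show "x \<in> edge_shift H" unfolding edge_shift_def by simp
  qed
  have cH: "cover_map H = cover_map G" unfolding H_def cover_map_def by simp
  have "finite_lgraph H" unfolding finite_lgraph_def H_def using finV EV fin
    by (auto simp: finite_lgraph_def intro: finite_subset)
  then have "presents H X" unfolding presents_def using esH cH pres by simp
  moreover have "right_resolving H" using rr unfolding right_resolving_def H_def by simp
  ultimately have "card (verts G) \<le> card E" using minimal unfolding H_def by fastforce
  then have "E = verts G" using EV finV by (meson card_seteq)
  with assms show ?thesis unfolding E_def by blast
qed

lemma pend_verts': "v \<in> verts G \<Longrightarrow> is_path_from G v p \<Longrightarrow> pend G v p \<in> verts G"
  using pend_verts[OF fin] by blast

lemma path_Lang: assumes v: "v \<in> verts G" and p: "is_path_from G v p"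
  shows "map (lab G) p \<in> Lang"
proof -
  obtain x i where x: "x \<in> edge_shift G" "src G (x i) = v" using essential[OF v] by blast
  define w where "w = pend G v p"
  have wv: "w \<in> verts G" unfolding w_def using pend_verts' v p by simp
  obtain x' j where x': "x' \<in> edge_shift G" "src G (x' j) = w" using essential[OF wv] by blast
  define L where "L = int (length p)"
  define z where "z = (\<lambda>t. if t < 0 then x (i + t) else if t < L then p ! nat t else x' (j + t - L))"
  have srcz: "src G (z t) = (if t < 0 then src G (x (i + t)) else if t < L then pend G v (take (nat t) p) else src G (x' (j + t - L)))" for t
    unfolding z_def using path_nth[OF p] L_def by auto
  have "z t \<in> edges G \<and> tgt G (z t) = src G (z (t + 1))" for t
  proof -
    consider "t < -1" | "t = -1" | "0 \<le> t" "t + 1 < L" | "0 \<le> t" "t + 1 = L" | "L \<le> t" by linarith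
    then show ?thesis
    proof cases
      case 1 then show ?thesis using es_edge[OF x(1), of "i + t"] unfolding z_def by (simp add: add.assoc)
    next
      case 2
      have "0 \<le> L" unfolding L_def by simp
      then have "z (t+1) = (if 0 < L then p ! 0 else x' j)" using 2 unfolding z_def by auto
      then have "src G (z (t+1)) = v"
        using path_nth[OF p, of 0] x'(2) unfolding w_def L_def by (cases p) auto
      then show ?thesis using es_edge[OF x(1), of "i - 1"] x(2) 2 unfolding z_def by simp
    next
      case 3
      then have "nat t < length p" "Suc (nat t) < length p" unfolding L_def by auto
      then show ?thesis using path_nth[OF p, of "nat t"] path_nth[OF p, of "Suc (nat t)"] 3
        unfolding z_def by (simp add: nat_add_distrib)
    next
      case 4
      then have "nat t < length p" "Suc (nat t) = length p" unfolding L_def by auto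
      then have "tgt G (z t) = w" "z t \<in> edges G" using path_nth[OF p, of "nat t"] 4 unfolding z_def w_def by auto
      moreover have "z (t + 1) = x' j" using 4 unfolding z_def by simp
      ultimately show ?thesis using x'(2) by simp
    next
      case 5
      then show ?thesis using es_edge[OF x'(1), of "j + t - L"] unfolding z_def L_def by (simp add: algebra_simps)
    qed
  qed
  then have zE: "z \<in> edge_shift G" unfolding edge_shift_def by simp
  have "win (cover_map G z) 0 (length p) = map (lab G) p"
    unfolding win_def cover_map_def z_def L_def by (rule nth_equalityI) auto
  moreover have "cover_map G z \<in> X" using zE pres by blast
  ultimately show ?thesis using win_Lang by metis
qed

lemma F_Lang: assumes "v \<in> verts G" shows "F v \<subseteq> Lang"
proof
  fix u assume "u \<in> F v"
  then obtain p where "is_path_from G v p" "u = map (lab G) p" unfolding F_mem by metis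
  then show "u \<in> Lang" using path_Lang assms by simp
qed

lemma Lang_path: assumes "u \<in> Lang" shows "\<exists>t p. t \<in> verts G \<and> is_path_from G t p \<and> map (lab G) p = u"
proof -
  obtain y k n where y: "y \<in> X" "u = win y k n" using assms unfolding Lang_def by blast
  obtain x where x: "x \<in> edge_shift G" "y = cover_map G x" using y(1) pres by blast
  have "src G (x k) \<in> verts G" using es_edge[OF x(1)] src_verts by blast
  moreover have "is_path_from G (src G (x k)) (win x k n)" using es_path[OF x(1)] by blast
  moreover have "map (lab G) (win x k n) = u" using y x cover_win by metis
  ultimately show ?thesis by blast
qed

definition T :: "nat list \<Rightarrow> nat set" where
  "T w = {pend G u p | u p. u \<in> verts G \<and> is_path_from G u p \<and> map (lab G) p = w}"

lemma T_sub: "T w \<subseteq> verts G"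
  unfolding T_def using pend_verts' by blast

lemma T_nil: "T [] = verts G"
  unfolding T_def by (auto intro!: exI[of _ "[]"])

lemma some_path: assumes "x \<in> F t"
  shows "is_path_from G t (SOME q. is_path_from G t q \<and> map (lab G) q = x) \<and>
         map (lab G) (SOME q. is_path_from G t q \<and> map (lab G) q = x) = x"
proof -
  have "\<exists>q. is_path_from G t q \<and> map (lab G) q = x" using assms unfolding F_mem by metis
  then show ?thesis by (rule someI_ex)
qed

lemma T_app: "T (w @ x) \<subseteq> (\<lambda>t. pend G t (SOME q. is_path_from G t q \<and> map (lab G) q = x)) ` {t \<in> T w. x \<in> F t}"
proof
  fix v assume "v \<in> T (w @ x)"
  then obtain u p where up: "v = pend G u p" "u \<in> verts G" "is_path_from G u p" "map (lab G) p = w @ x"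
    unfolding T_def by blast
  define p1 where "p1 = take (length w) p"
  define p2 where "p2 = drop (length w) p"
  have p12: "p = p1 @ p2" unfolding p1_def p2_def by simp
  have l1: "map (lab G) p1 = w" "map (lab G) p2 = x" using up(4) unfolding p1_def p2_def
    by (metis append_eq_conv_conj take_map drop_map)+
  have pa: "is_path_from G u p1" "is_path_from G (pend G u p1) p2" using up(3) unfolding p12 path_append by auto
  define t where "t = pend G u p1"
  have tT: "t \<in> T w" unfolding T_def t_def using up(2) pa(1) l1(1) by blast
  have xF: "x \<in> F t" unfolding F_mem t_def using pa(2) l1(2) by metis
  have "(SOME q. is_path_from G t q \<and> map (lab G) q = x) = p2"
    using path_unique[OF rr] some_path[OF xF] pa(2) l1(2) unfolding t_def by metis
  moreover have "v = pend G t p2" using up(1) unfolding p12 pend_append t_def by simp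
  ultimately show "v \<in> (\<lambda>t. pend G t (SOME q. is_path_from G t q \<and> map (lab G) q = x)) ` {t \<in> T w. x \<in> F t}"
    using tT xF by force
qed

lemma T_app_ne: assumes "t \<in> T w" "x \<in> F t" shows "T (w @ x) \<noteq> {}"
proof -
  obtain u p where up: "t = pend G u p" "u \<in> verts G" "is_path_from G u p" "map (lab G) p = w"
    using assms(1) unfolding T_def by blast
  obtain q where q: "is_path_from G t q" "map (lab G) q = x" using assms(2) unfolding F_mem by metis
  have "is_path_from G u (p @ q)" using up q path_append by auto
  then have "pend G u (p @ q) \<in> T (w @ x)" unfolding T_def mem_Collect_eq
    by (intro exI[of _ u] exI[of _ "p @ q"]) (use up q in simp)
  then show ?thesis by blast
qed

lemma Vne: "verts G \<noteq> {}"
proof -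
  have "(\<lambda>_. 0) \<in> X" unfolding Xdef ray_def by (simp add: lex_le_zero)
  then obtain x where "x \<in> edge_shift G" using pres by blast
  then show ?thesis using es_edge src_verts by blast
qed

lemma sync: "\<exists>w v0. T w = {v0}"
proof -
  have "\<forall>w. card (T w) = n \<longrightarrow> T w \<noteq> {} \<longrightarrow> (\<exists>w v0. T w = {v0})" for n
  proof (induction n rule: less_induct)
    case (less n)
    show ?case
    proof (intro allI impI)
      fix w assume c: "card (T w) = n" and ne: "T w \<noteq> {}"
      have finT: "finite (T w)" using T_sub finV finite_subset by blast
      show "\<exists>w v0. T w = {v0}"
      proof (cases "\<exists>v0. T w = {v0}")
        case True then show ?thesis by blast
      next
        case False
        with ne obtain a b where ab: "a \<in> T w" "b \<in> T w" "a \<noteq> b" by blast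
        then have "F a \<noteq> F b" using F_eq T_sub by blast
        then obtain a' b' x where ab': "a' \<in> T w" "b' \<in> T w" "x \<in> F a'" "x \<notin> F b'"
          using ab by blast
        let ?f = "\<lambda>t. pend G t (SOME q. is_path_from G t q \<and> map (lab G) q = x)"
        have sub: "{t \<in> T w. x \<in> F t} \<subseteq> T w - {b'}" using ab' by auto
        have fin2: "finite (?f ` {t \<in> T w. x \<in> F t})" using finT by simp
        have "card (T (w @ x)) \<le> card (?f ` {t \<in> T w. x \<in> F t})"
          by (rule card_mono[OF fin2 T_app])
        also have "\<dots> \<le> card {t \<in> T w. x \<in> F t}" using finT by (simp add: card_image_le)
        also have "\<dots> \<le> card (T w - {b'})" using sub finT by (simp add: card_mono)
        also have "\<dots> < card (T w)" using finT ab'(2) by (rule card_Diff1_less)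
        finally have "card (T (w @ x)) < n" using c by simp
        moreover have "T (w @ x) \<noteq> {}" using T_app_ne ab' by blast
        ultimately show ?thesis using less.IH by blast
      qed
    qed
  qed
  then show ?thesis using T_nil Vne by blast
qed

lemma T_single: assumes "T w = {v}" shows "F v = FX w"
proof (intro set_eqI iffI)
  fix u assume "u \<in> F v"
  then obtain q where q: "is_path_from G v q" "map (lab G) q = u" unfolding F_mem by metis
  have "v \<in> T w" using assms by simp
  then obtain t p where tp: "v = pend G t p" "t \<in> verts G" "is_path_from G t p" "map (lab G) p = w"
    unfolding T_def by blast
  have "is_path_from G t (p @ q)" using tp q path_append by auto
  then have "map (lab G) (p @ q) \<in> Lang" using path_Lang tp(2) by blast
  then show "u \<in> FX w" unfolding FX_def using tp q by simp
next
  fix u assume "u \<in> FX w"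
  then have "w @ u \<in> Lang" unfolding FX_def by simp
  then obtain t r where r: "t \<in> verts G" "is_path_from G t r" "map (lab G) r = w @ u"
    using Lang_path by blast
  define p1 where "p1 = take (length w) r"
  define p2 where "p2 = drop (length w) r"
  have p12: "r = p1 @ p2" unfolding p1_def p2_def by simp
  have l1: "map (lab G) p1 = w" "map (lab G) p2 = u" using r(3) unfolding p1_def p2_def
    by (metis append_eq_conv_conj take_map drop_map)+
  have pa: "is_path_from G t p1" "is_path_from G (pend G t p1) p2" using r(2) unfolding p12 path_append by auto
  have "pend G t p1 \<in> T w" unfolding T_def using r(1) pa(1) l1(1) by blast
  then have "pend G t p1 = v" using assms by simp
  then show "u \<in> F v" unfolding F_mem using pa(2) l1(2) by metis
qed

end

lemma stab: assumes fin: "finite (range f)" and dec: "\<And>k. f (Suc k) \<subseteq> f k"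
  shows "\<exists>K. \<forall>k\<ge>K. f k = \<Inter>(range f)"
proof -
  define I where "I = (\<lambda>V. SOME i. f i = V) ` range f"
  have finI: "finite I" unfolding I_def using fin by simp
  have neI: "I \<noteq> {}" unfolding I_def by simp
  define K where "K = Max I"
  have anti: "m \<le> n \<Longrightarrow> f n \<subseteq> f m" for m n
    using dec by (rule lift_Suc_antimono_le)
  have fK: "f K \<subseteq> f k" for k
  proof -
    define i where "i = (SOME i. f i = f k)"
    have fi: "f i = f k" unfolding i_def by (rule someI_ex) blast
    have "i \<in> I" unfolding I_def i_def by blast
    then have "i \<le> K" unfolding K_def using finI by simp
    then show ?thesis using anti fi by blast
  qed
  have "\<forall>k\<ge>K. f k = \<Inter>(range f)"
  proof (intro allI impI)
    fix k assume "K \<le> k"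
    then have "f k \<subseteq> f K" using anti by blast
    moreover have "f K \<subseteq> \<Inter>(range f)" using fK by blast
    moreover have "\<Inter>(range f) \<subseteq> f k" by blast
    ultimately show "f k = \<Inter>(range f)" using fK by blast
  qed
  then show ?thesis by blast
qed

context bsh
begin

lemma finite_shifts: "finite (range (\<lambda>n. shf n g))"
proof -
  obtain p N where pN: "p \<ge> 1" "\<forall>i\<ge>N. g (i + p) = g i" using evp unfolding eventually_periodic_seq_def by blast
  have "shf n g \<in> (\<lambda>n. shf n g) ` {..<N+p}" for n
  proof (induction n rule: less_induct)
    case (less n)
    show ?case
    proof (cases "n < N + p")
      case True then show ?thesis by simp
    next
      case False
      have "shf n g = shf (n - p) g"
      proof
        fix i
        have "N \<le> n - p + i" using False by simp
        then have a: "g (n - p + i + p) = g (n - p + i)" using pN(2) by blast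
        have b: "n - p + i + p = n + i" using False by simp
        show "shf n g i = shf (n - p) g i" unfolding shf_app using a b by metis
      qed
      moreover have "n - p < n" using pN False by simp
      ultimately show ?thesis using less.IH by simp
    qed
  qed
  then have "range (\<lambda>n. shf n g) \<subseteq> (\<lambda>n. shf n g) ` {..<N+p}" by blast
  then show ?thesis using finite_subset by blast
qed

lemma finite_C: "finite (range C)"
proof -
  have "range C \<subseteq> (\<lambda>s. {u. adm g u \<and> wle u s}) ` range (\<lambda>n. shf n g)"
    unfolding C_def by blast
  then show ?thesis using finite_shifts finite_subset by blast
qed

definition wl :: "(int \<Rightarrow> nat) \<Rightarrow> int \<Rightarrow> nat \<Rightarrow> nat list" where
  "wl y t k = win y (t - int k) k"

lemma wl_Suc: "wl y t (Suc k) = y (t - int (Suc k)) # wl y t k"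
  unfolding wl_def win_Suc by (simp add: algebra_simps)

lemma wl_Suc_right: "wl y (t + 1) (Suc k) = wl y t k @ [y t]"
  unfolding wl_def win_Suc_right by (simp add: algebra_simps)

lemma FX_Cons: "FX (c # w) \<subseteq> FX w"
  unfolding FX_def Lang_adm by auto

definition D :: "(int \<Rightarrow> nat) \<Rightarrow> int \<Rightarrow> nat list set" where
  "D y t = (\<Inter>k. FX (wl y t k))"

lemma D_stab: assumes "y \<in> X" shows "\<exists>K. \<forall>k\<ge>K. FX (wl y t k) = D y t"
proof -
  have "range (\<lambda>k. FX (wl y t k)) \<subseteq> range C"
  proof
    fix V assume "V \<in> range (\<lambda>k. FX (wl y t k))"
    then obtain k where "V = FX (wl y t k)" by blast
    moreover have "wl y t k \<in> Lang" unfolding wl_def using win_Lang[OF assms] by blast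
    ultimately show "V \<in> range C" using FX_C by blast
  qed
  then have "finite (range (\<lambda>k. FX (wl y t k)))" using finite_C finite_subset by blast
  moreover have "FX (wl y t (Suc k)) \<subseteq> FX (wl y t k)" for k unfolding wl_Suc by (rule FX_Cons)
  ultimately show ?thesis unfolding D_def by (rule stab)
qed

lemma D_C: assumes "y \<in> X" shows "\<exists>n. D y t = C n"
proof -
  obtain K where K: "\<forall>k\<ge>K. FX (wl y t k) = D y t" using D_stab[OF assms] by blast
  have "wl y t K \<in> Lang" unfolding wl_def using win_Lang[OF assms] by blast
  then obtain n where "FX (wl y t K) = C n" using FX_C by blast
  moreover have "FX (wl y t K) = D y t" using K by simp
  ultimately show ?thesis by metis
qed

lemma D_deriv: assumes "y \<in> X" shows "D y (t + 1) = {u. y t # u \<in> D y t}"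
proof -
  obtain K1 where K1: "\<forall>k\<ge>K1. FX (wl y t k) = D y t" using D_stab[OF assms] by blast
  obtain K2 where K2: "\<forall>k\<ge>K2. FX (wl y (t+1) k) = D y (t+1)" using D_stab[OF assms] by blast
  define k where "k = max K1 K2"
  have "D y (t + 1) = FX (wl y (t+1) (Suc k))" using K2 unfolding k_def by simp
  also have "\<dots> = {u. y t # u \<in> FX (wl y t k)}" unfolding wl_Suc_right FX_def by simp
  also have "\<dots> = {u. y t # u \<in> D y t}" using K1 unfolding k_def by simp
  finally show ?thesis .
qed

lemma D_single: assumes "y \<in> X" shows "[y t] \<in> D y t"
proof -
  obtain K where K: "\<forall>k\<ge>K. FX (wl y t k) = D y t" using D_stab[OF assms] by blast
  have "wl y (t+1) (Suc K) \<in> Lang" unfolding wl_def using win_Lang[OF assms] by blast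
  then have "[y t] \<in> FX (wl y t K)" unfolding FX_def wl_Suc_right by simp
  then show ?thesis using K by simp
qed

lemma single_C: "c \<le> g n \<Longrightarrow> [c] \<in> C n"
  unfolding C_def using g_le_g0[of n] by auto

lemma edge_C: assumes "e \<in> edges G" "F (src G e) = C n"
  shows "(lab G e = g n \<and> F (tgt G e) = C (Suc n)) \<or> (lab G e < g n \<and> F (tgt G e) = C 0)"
proof -
  have e: "F (tgt G e) = {u. lab G e # u \<in> C n}" using Fderiv[OF rr assms(1)] assms(2) by simp
  have "[] \<in> F (tgt G e)" by simp
  then have ne: "{u. lab G e # u \<in> C n} \<noteq> {}" unfolding e by blast
  show ?thesis
  proof (cases "lab G e = g n")
    case True then show ?thesis using e deriv_C by simp
  next
    case False
    then show ?thesis using e deriv_C ne by (cases "lab G e < g n") auto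
  qed
qed

lemma edge_lab: assumes "v \<in> verts G" "F v = C n" "c \<le> g n"
  shows "\<exists>e\<in>edges G. src G e = v \<and> lab G e = c"
  using single_C[OF assms(3)] assms(2) F_single by metis

lemma all_C: "(\<forall>v\<in>verts G. \<exists>n. F v = C n) \<and> (\<forall>n. \<exists>v\<in>verts G. F v = C n)"
proof -
  obtain w0 v0 where wv: "T w0 = {v0}" using sync by blast
  have v0V: "v0 \<in> verts G" using T_sub wv by blast
  have Fv0: "F v0 = FX w0" using T_single[OF wv] .
  define R where "R = {pend G v0 q | q. is_path_from G v0 q}"
  have RV: "R \<subseteq> verts G" unfolding R_def using pend_verts' v0V by blast
  have v0R: "v0 \<in> R" unfolding R_def by (auto intro!: exI[of _ "[]"])
  have R_F: "\<exists>n. F v = C n" if vR: "v \<in> R" for v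
  proof -
    obtain q where q: "v = pend G v0 q" "is_path_from G v0 q" using vR unfolding R_def by blast
    have Fv: "F v = {u. map (lab G) q @ u \<in> F v0}" using Fpath[OF rr q(2)] q(1) by simp
    then have Fv': "F v = FX (w0 @ map (lab G) q)" unfolding Fv0 FX_def by simp
    have "[] \<in> F v" by simp
    then have "w0 @ map (lab G) q \<in> Lang" unfolding Fv' FX_def by simp
    then show ?thesis using FX_C Fv' by metis
  qed
  have R_step: "tgt G e \<in> R" if h: "v \<in> R" "e \<in> edges G" "src G e = v" for v e
  proof -
    obtain q where q: "v = pend G v0 q" "is_path_from G v0 q" using h unfolding R_def by blast
    have "is_path_from G v0 (q @ [e])" using q h path_append by auto
    moreover have "pend G v0 (q @ [e]) = tgt G e" using q pend_append by simp
    ultimately show ?thesis unfolding R_def by (metis (mono_tags, lifting) mem_Collect_eq)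
  qed
  have reach_succ: "\<exists>v'\<in>R. F v' = C (Suc n)" if h: "v \<in> R" "F v = C n" for v n
  proof -
    obtain e where e: "e \<in> edges G" "src G e = v" "lab G e = g n" using edge_lab[of v n "g n"] h RV by auto
    have "F (tgt G e) = C (Suc n)" using Fderiv[OF rr e(1)] e h(2) deriv_C by simp
    then show ?thesis using R_step[OF h(1) e(1,2)] by blast
  qed
  have reach_0: "\<exists>v'\<in>R. F v' = C 0" if h: "v \<in> R" "F v = C n" "0 < g n" for v n
  proof -
    obtain e where e: "e \<in> edges G" "src G e = v" "lab G e = 0" using edge_lab[of v n 0] h RV by auto
    have "F (tgt G e) = C 0" using Fderiv[OF rr e(1)] e h(2,3) deriv_C by simp
    then show ?thesis using R_step[OF h(1) e(1,2)] by blast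
  qed
  obtain m where m: "F v0 = C m" using R_F v0R by blast
  have up: "\<exists>v\<in>R. F v = C (m + i)" for i
  proof (induction i)
    case 0 then show ?case using m v0R by auto
  next
    case (Suc i) then show ?case using reach_succ by fastforce
  qed
  obtain j where j: "j \<ge> m" "0 < g j" using nz by blast
  obtain vj where vj: "vj \<in> R" "F vj = C j" using up[of "j - m"] j by auto
  obtain u0 where u0: "u0 \<in> R" "F u0 = C 0" using reach_0[OF vj j(2)] by blast
  have allR: "\<exists>v\<in>R. F v = C n" for n
  proof (induction n)
    case 0 then show ?case using u0 by blast
  next
    case (Suc n) then show ?case using reach_succ by blast
  qed
  define H where "H = G\<lparr>verts := R, edges := {e \<in> edges G. src G e \<in> R}\<rparr>"
  have esH: "edge_shift H \<subseteq> edge_shift G" unfolding edge_shift_def H_def by auto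
  have cH: "cover_map H = cover_map G" unfolding H_def cover_map_def by simp
  have "X \<subseteq> cover_map H ` edge_shift H"
  proof
    fix y assume y: "y \<in> X"
    define V where "V = (\<lambda>t. SOME v. v \<in> R \<and> F v = D y t)"
    have V: "V t \<in> R \<and> F (V t) = D y t" for t
    proof -
      obtain n where "D y t = C n" using D_C[OF y] by blast
      then have "\<exists>v. v \<in> R \<and> F v = D y t" using allR by metis
      then show ?thesis unfolding V_def by (rule someI_ex)
    qed
    define x where "x = (\<lambda>t. SOME e. e \<in> edges G \<and> src G e = V t \<and> lab G e = y t)"
    have x: "x t \<in> edges G \<and> src G (x t) = V t \<and> lab G (x t) = y t" for t
    proof -
      have "[y t] \<in> F (V t)" using V D_single[OF y] by simp
      then have "\<exists>e. e \<in> edges G \<and> src G e = V t \<and> lab G e = y t" using F_single by metis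
      then show ?thesis unfolding x_def by (rule someI_ex)
    qed
    have tg: "tgt G (x t) = src G (x (t + 1))" for t
    proof -
      have "F (tgt G (x t)) = {u. y t # u \<in> F (V t)}" using Fderiv[OF rr] x by metis
      also have "\<dots> = D y (t + 1)" using V D_deriv[OF y] by simp
      finally have "F (tgt G (x t)) = F (V (t + 1))" using V by simp
      moreover have "tgt G (x t) \<in> verts G" using R_step[of "V t" "x t"] V x RV by blast
      moreover have "V (t + 1) \<in> verts G" using V RV by blast
      ultimately show ?thesis using F_eq x by metis
    qed
    have "x \<in> edge_shift H" unfolding edge_shift_def H_def using x tg V by simp
    moreover have "cover_map G x = y" unfolding cover_map_def using x by auto
    ultimately show "y \<in> cover_map H ` edge_shift H" using cH by force
  qed
  moreover have "cover_map H ` edge_shift H \<subseteq> X" unfolding cH using image_mono[OF esH, of "cover_map G"] pres by simp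
  ultimately have "cover_map H ` edge_shift H = X" by blast
  moreover have "finite_lgraph H" unfolding finite_lgraph_def H_def using finV RV fin
    by (auto simp: finite_lgraph_def intro: finite_subset R_step)
  ultimately have "presents H X" unfolding presents_def by simp
  moreover have "right_resolving H" using rr unfolding right_resolving_def H_def by simp
  ultimately have "card (verts G) \<le> card R" using minimal unfolding H_def by fastforce
  then have "R = verts G" using RV finV by (meson card_seteq)
  then show ?thesis using R_F allR by blast
qed

lemma VC: "v \<in> verts G \<Longrightarrow> \<exists>n. F v = C n" using all_C by blast
lemma CV: "\<exists>v\<in>verts G. F v = C n" using all_C by blast

end

lemma mod_succ: "0 < (p::int) \<Longrightarrow> (t + 1) mod p = (if t mod p + 1 < p then t mod p + 1 else 0)"
proof -
  assume p: "0 < p"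
  have r: "0 \<le> t mod p" "t mod p < p" using p by auto
  have e: "(t + 1) mod p = (t mod p + 1) mod p" by (simp add: mod_add_left_eq)
  show ?thesis
  proof (cases "t mod p + 1 < p")
    case True
    have "(t mod p + 1) mod p = t mod p + 1" using True r by (intro mod_pos_pos_trivial) auto
    with e have "(t + 1) mod p = t mod p + 1" by (rule trans)
    then show ?thesis using True by simp
  next
    case False
    then have "t mod p + 1 = p" using r by simp
    then have "(t mod p + 1) mod p = 0" by simp
    with e have "(t + 1) mod p = 0" by (rule trans)
    then show ?thesis using False by simp
  qed
qed

lemma nat_mod_succ: assumes "0 < p"
  shows "nat ((t + 1) mod int p) = (if nat (t mod int p) + 1 < p then nat (t mod int p) + 1 else 0)"
proof -
  define r where "r = t mod int p"
  have r: "0 \<le> r" using assms unfolding r_def by simp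
  have m: "(t + 1) mod int p = (if r + 1 < int p then r + 1 else 0)"
    using mod_succ[of "int p" t] assms unfolding r_def by simp
  show ?thesis
  proof (cases "r + 1 < int p")
    case True
    then have "nat r + 1 < p" using r by linarith
    moreover have "nat (r + 1) = nat r + 1" using r by simp
    ultimately show ?thesis using m True unfolding r_def[symmetric] by simp
  next
    case False
    then have "\<not> nat r + 1 < p" using r by linarith
    then show ?thesis using m False unfolding r_def[symmetric] by simp
  qed
qed

lemma sep_pairs: "finite P \<Longrightarrow> \<forall>(a, b)\<in>P. a \<noteq> b \<Longrightarrow> \<exists>K. \<forall>(a, b)\<in>P. \<exists>i<K. (a :: nat \<Rightarrow> nat) i \<noteq> b i"
proof (induction P rule: finite_induct)
  case empty then show ?case by simp
next
  case (insert ab P)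
  obtain a b where ab: "ab = (a, b)" by (cases ab)
  then have "a \<noteq> b" using insert.prems by simp
  then obtain j0 where j0: "a j0 \<noteq> b j0" by auto
  obtain K where K: "\<forall>(a, b)\<in>P. \<exists>i<K. a i \<noteq> b i" using insert by auto
  show ?case
  proof (intro exI[of _ "max K (Suc j0)"] ballI)
    fix cd assume "cd \<in> insert ab P"
    then show "case cd of (a, b) \<Rightarrow> \<exists>i<max K (Suc j0). a i \<noteq> b i"
    proof
      assume "cd = ab" then show ?thesis using ab j0 by (auto intro!: exI[of _ j0])
    next
      assume cP: "cd \<in> P"
      obtain c d where cd: "cd = (c, d)" by (cases cd)
      then obtain i where "i < K" "c i \<noteq> d i" using K cP by blast
      then show ?thesis using cd by (intro case_prodI2) (auto intro!: exI[of _ i])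
    qed
  qed
qed

primrec fwd :: "lgraph \<Rightarrow> (int \<Rightarrow> nat) \<Rightarrow> nat \<Rightarrow> nat \<Rightarrow> nat" where
  "fwd G y v0 0 = v0"
| "fwd G y v0 (Suc n) = tgt G (SOME e. e \<in> edges G \<and> src G e = fwd G y v0 n \<and> lab G e = y (int n))"

definition fed :: "lgraph \<Rightarrow> (int \<Rightarrow> nat) \<Rightarrow> nat \<Rightarrow> nat \<Rightarrow> nat" where
  "fed G y v0 n = (SOME e. e \<in> edges G \<and> src G e = fwd G y v0 n \<and> lab G e = y (int n))"

context bsh
begin

definition Pre :: "(int \<Rightarrow> nat) \<Rightarrow> (int \<Rightarrow> nat) set" where
  "Pre y = {x \<in> edge_shift G. cover_map G x = y}"

definition Phi :: "(int \<Rightarrow> nat) \<Rightarrow> int \<Rightarrow> nat list set" where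
  "Phi x t = F (src G (x t))"

definition typeA :: "(int \<Rightarrow> nat) \<Rightarrow> bool" where
  "typeA x \<longleftrightarrow> (\<forall>T. \<exists>t\<le>T. Phi x t = C 0)"

lemma pre_facts: assumes "x \<in> Pre y"
  shows "x t \<in> edges G \<and> lab G (x t) = y t \<and> tgt G (x t) = src G (x (t + 1)) \<and> src G (x t) \<in> verts G"
proof -
  have x: "x \<in> edge_shift G" "cover_map G x = y" using assms unfolding Pre_def by auto
  have e: "x t \<in> edges G \<and> tgt G (x t) = src G (x (t + 1))" using es_edge[OF x(1)] .
  moreover have "lab G (x t) = y t" using x(2) unfolding cover_map_def by auto
  moreover have "src G (x t) \<in> verts G" using src_verts e by blast
  ultimately show ?thesis by blast
qed

lemma Phi_step: assumes "x \<in> Pre y" shows "Phi x (t + 1) = {u. y t # u \<in> Phi x t}"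
  using Fderiv[OF rr, of "x t"] pre_facts[OF assms, of t] unfolding Phi_def by simp

lemma Phi_mono: assumes "x \<in> Pre y" "x' \<in> Pre y" "Phi x' s \<subseteq> Phi x s" "s \<le> t"
  shows "Phi x' t \<subseteq> Phi x t"
  using assms(4)
proof (induction t rule: int_ge_induct)
  case base then show ?case using assms(3) .
next
  case (step i) then show ?case unfolding Phi_step[OF assms(1)] Phi_step[OF assms(2)] by auto
qed

lemma Phi_eq_imp: assumes "x \<in> Pre y" "x' \<in> Pre y" "\<And>t. Phi x t = Phi x' t" shows "x = x'"
proof
  fix t
  have "F (src G (x t)) = F (src G (x' t))" using assms(3)[of t] unfolding Phi_def .
  then have "src G (x t) = src G (x' t)"
    using F_eq pre_facts[OF assms(1), of t] pre_facts[OF assms(2), of t] by blast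
  moreover have "lab G (x t) = lab G (x' t)" using pre_facts[OF assms(1), of t] pre_facts[OF assms(2), of t] by simp
  ultimately show "x t = x' t" using rr_eq pre_facts[OF assms(1), of t] pre_facts[OF assms(2), of t] by blast
qed

lemma Phi_C: assumes "x \<in> Pre y" shows "\<exists>n. Phi x t = C n"
  using VC pre_facts[OF assms] unfolding Phi_def by blast

lemma Phi_sub: assumes "x \<in> Pre y" shows "Phi x t \<subseteq> C 0"
  using Phi_C[OF assms] C_sub by blast

lemma A_unique: assumes "x \<in> Pre y" "x' \<in> Pre y" "typeA x" "typeA x'" shows "x = x'"
proof (rule Phi_eq_imp[OF assms(1,2)])
  fix t
  obtain s where s: "s \<le> t" "Phi x s = C 0" using assms(3) unfolding typeA_def by blast
  obtain s' where s': "s' \<le> t" "Phi x' s' = C 0" using assms(4) unfolding typeA_def by blast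
  have "Phi x' t \<subseteq> Phi x t" using Phi_mono[OF assms(1,2) _ s(1)] Phi_sub[OF assms(2)] s(2) by simp
  moreover have "Phi x t \<subseteq> Phi x' t" using Phi_mono[OF assms(2,1) _ s'(1)] Phi_sub[OF assms(1)] s'(2) by simp
  ultimately show "Phi x t = Phi x' t" by blast
qed

lemma stepB: assumes "x \<in> Pre y" "Phi x t = C n" "Phi x (t + 1) \<noteq> C 0"
  shows "y t = g n \<and> Phi x (t + 1) = C (Suc n)"
  using edge_C[of "x t" n] pre_facts[OF assms(1), of t] assms(2,3) unfolding Phi_def by auto

lemma chainB: assumes "x \<in> Pre y" "Phi x s = C n" "\<And>i. 1 \<le> i \<Longrightarrow> i \<le> k \<Longrightarrow> Phi x (s + int i) \<noteq> C 0"
  shows "Phi x (s + int k) = C (n + k) \<and> (\<forall>i<k. y (s + int i) = g (n + i))"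
  using assms(3)
proof (induction k)
  case 0 then show ?case using assms(2) by simp
next
  case (Suc k)
  then have IH: "Phi x (s + int k) = C (n + k)" "\<forall>i<k. y (s + int i) = g (n + i)" by auto
  have "Phi x (s + int k + 1) \<noteq> C 0" using Suc.prems[of "Suc k"] by (simp add: ac_simps)
  then have st: "y (s + int k) = g (n + k) \<and> Phi x (s + int k + 1) = C (Suc (n + k))"
    using stepB[OF assms(1) IH(1)] by blast
  have e: "s + int (Suc k) = s + int k + 1" by simp
  have h1: "Phi x (s + int (Suc k)) = C (n + Suc k)" unfolding e using st by simp
  have h2: "\<forall>i<Suc k. y (s + int i) = g (n + i)" using IH(2) st by (auto simp: less_Suc_eq)
  show ?case using h1 h2 by blast
qed

lemma adm_prefix: "adm g (map (shf n g) [0..<k])"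
proof (induction k arbitrary: n)
  case 0 then show ?case by simp
next
  case (Suc k)
  have e1: "map (shf n g) [0..<Suc k] = shf n g 0 # map (\<lambda>i. shf n g (Suc i)) [0..<k]"
    by (rule map_upt_Suc)
  have e2: "(\<lambda>i. shf n g (Suc i)) = shf (Suc n) g" by (simp add: fun_eq_iff)
  have e: "map (shf n g) [0..<Suc k] = g n # map (shf (Suc n) g) [0..<k]"
    unfolding e1 e2 by simp
  have "wle (map (shf n g) [0..<Suc k]) g" by (rule wle_map_lex[OF parry])
  then show ?case using Suc.IH[of "Suc n"] unfolding e adm.simps by blast
qed

lemma C_le: assumes "C n \<subseteq> C m" shows "lex_le (shf n g) (shf m g)"
proof (rule map_lex_wle)
  fix k
  have "map (shf n g) [0..<k] \<in> C n" unfolding C_def using adm_prefix wle_map_lex[OF lex_le_refl] by simp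
  then show "wle (map (shf n g) [0..<k]) (shf m g)" using assms unfolding C_def by auto
qed

lemma C_inj: "C n = C m \<Longrightarrow> shf n g = shf m g"
  using C_le lex_le_antisym by (metis order_refl)

lemma sep: "\<exists>K. \<forall>n m. (\<forall>i<K. g (n + i) = g (m + i)) \<longrightarrow> shf n g = shf m g"
proof -
  define S where "S = range (\<lambda>n. shf n g)"
  define P where "P = {(a, b). a \<in> S \<and> b \<in> S \<and> a \<noteq> b}"
  have "P \<subseteq> S \<times> S" unfolding P_def by auto
  moreover have "finite (S \<times> S)" using finite_shifts unfolding S_def by simp
  ultimately have "finite P" by (rule finite_subset)
  then obtain K where K: "\<forall>(a, b)\<in>P. \<exists>i<K. a i \<noteq> b i" using sep_pairs[of P] unfolding P_def by auto
  show ?thesis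
  proof (intro exI[of _ K] allI impI)
    fix n m assume h: "\<forall>i<K. g (n + i) = g (m + i)"
    show "shf n g = shf m g"
    proof (rule ccontr)
      assume "shf n g \<noteq> shf m g"
      then have "(shf n g, shf m g) \<in> P" unfolding P_def S_def by auto
      then obtain i where "i < K" "shf n g i \<noteq> shf m g i" using K by auto
      then show False using h by simp
    qed
  qed
qed

lemma B_unique: assumes "x \<in> Pre y" "x' \<in> Pre y" "\<not> typeA x" "\<not> typeA x'" shows "x = x'"
proof -
  obtain T1 where T1: "\<forall>t\<le>T1. Phi x t \<noteq> C 0" using assms(3) unfolding typeA_def by blast
  obtain T2 where T2: "\<forall>t\<le>T2. Phi x' t \<noteq> C 0" using assms(4) unfolding typeA_def by blast
  define T where "T = min T1 T2"
  have TT: "T \<le> T1" "T \<le> T2" unfolding T_def by auto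
  obtain K where K: "\<forall>n m. (\<forall>i<K. g (n + i) = g (m + i)) \<longrightarrow> shf n g = shf m g" using sep by blast
  have low: "Phi x t = Phi x' t" if "t \<le> T" for t
  proof -
    define s where "s = t - int K"
    obtain n where n: "Phi x s = C n" using Phi_C[OF assms(1)] by blast
    obtain n' where n': "Phi x' s = C n'" using Phi_C[OF assms(2)] by blast
    have le: "s + int i \<le> T" if "i \<le> K" for i using that \<open>t \<le> T\<close> unfolding s_def by linarith
    have c1: "Phi x (s + int K) = C (n + K) \<and> (\<forall>i<K. y (s + int i) = g (n + i))"
    proof (rule chainB[OF assms(1) n])
      fix i assume "1 \<le> i" "i \<le> K"
      then have "s + int i \<le> T1" using le TT by fastforce
      then show "Phi x (s + int i) \<noteq> C 0" using T1 by blast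
    qed
    have c2: "Phi x' (s + int K) = C (n' + K) \<and> (\<forall>i<K. y (s + int i) = g (n' + i))"
    proof (rule chainB[OF assms(2) n'])
      fix i assume "1 \<le> i" "i \<le> K"
      then have "s + int i \<le> T2" using le TT by fastforce
      then show "Phi x' (s + int i) \<noteq> C 0" using T2 by blast
    qed
    have "\<forall>i<K. g (n + i) = g (n' + i)" using c1 c2 by auto
    then have "shf n g = shf n' g" using K by blast
    then have "shf (n + K) g = shf (n' + K) g" by (metis shf_shf)
    then have "C (n + K) = C (n' + K)" unfolding C_def by simp
    then show ?thesis using c1 c2 unfolding s_def by simp
  qed
  show ?thesis
  proof (rule Phi_eq_imp[OF assms(1,2)])
    fix t
    show "Phi x t = Phi x' t"
    proof (cases "t \<le> T")
      case True then show ?thesis using low by blast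
    next
      case False
      then have "T \<le> t" by simp
      then show ?thesis using Phi_mono[OF assms(1,2) _ \<open>T \<le> t\<close>] Phi_mono[OF assms(2,1) _ \<open>T \<le> t\<close>] low[of T]
        by blast
    qed
  qed
qed

lemma shf_per: assumes "\<forall>i. g (i + p) = g i" shows "shf (m * p) g = g"
proof (induction m)
  case 0 then show ?case by simp
next
  case (Suc m)
  show ?case
  proof
    fix i
    have "g (m * p + i + p) = g (m * p + i)" using assms by blast
    also have "\<dots> = g i" using fun_cong[OF Suc.IH, of i] by simp
    finally show "shf (Suc m * p) g i = g i" by (simp add: ac_simps)
  qed
qed

lemma periodic_typeA: assumes "periodic_seq g" "x \<in> Pre y" shows "typeA x"
proof (rule ccontr)
  assume "\<not> typeA x"
  then obtain T where T: "\<forall>t\<le>T. Phi x t \<noteq> C 0" unfolding typeA_def by blast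
  obtain p where p: "p \<ge> 1" "\<forall>i. g (i + p) = g i" using assms(1) unfolding periodic_seq_def by blast
  define s where "s = T - int p"
  obtain n where n: "Phi x s = C n" using Phi_C[OF assms(2)] by blast
  define i0 where "i0 = p - n mod p"
  have lt: "n mod p < p" using p(1) by simp
  have i0: "1 \<le> i0" "i0 \<le> p" unfolding i0_def using lt by linarith+
  have dm: "n = n div p * p + n mod p" by simp
  have "n + i0 = n div p * p + p" unfolding i0_def using lt dm by linarith
  then have ni: "n + i0 = (n div p + 1) * p" by (simp add: algebra_simps)
  have "Phi x (s + int i0) = C (n + i0)"
    using chainB[OF assms(2) n, of i0] T i0 unfolding s_def by auto
  also have "C (n + i0) = C 0" unfolding C_def ni shf_per[OF p(2)] by simp
  finally show False using T i0 unfolding s_def by auto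
qed

lemma periodic_one: assumes "periodic_seq g" shows "one_to_one G"
  unfolding one_to_one_def
proof (rule inj_onI)
  fix x x' assume h: "x \<in> edge_shift G" "x' \<in> edge_shift G" "cover_map G x = cover_map G x'"
  then have "x \<in> Pre (cover_map G x)" "x' \<in> Pre (cover_map G x)" unfolding Pre_def by auto
  then show "x = x'" using A_unique periodic_typeA[OF assms] by blast
qed

lemma le2: "finite (Pre y) \<and> card (Pre y) \<le> 2"
proof -
  have inj: "inj_on typeA (Pre y)"
  proof (rule inj_onI)
    fix x x' assume h: "x \<in> Pre y" "x' \<in> Pre y" "typeA x = typeA x'"
    show "x = x'"
    proof (cases "typeA x")
      case True then show ?thesis using A_unique[OF h(1,2)] h(3) by simp
    next
      case False then show ?thesis using B_unique[OF h(1,2)] h(3) by simp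
    qed
  qed
  have "finite (Pre y)" by (rule inj_on_finite[OF inj subset_UNIV]) simp
  moreover have "card (Pre y) \<le> card (UNIV :: bool set)"
    by (rule card_inj_on_le[OF inj subset_UNIV]) simp
  ultimately show ?thesis by simp
qed

end

context bsh
begin

lemma C_ne0: assumes "\<not> periodic_seq g" "1 \<le> n" shows "C n \<noteq> C 0"
proof
  assume "C n = C 0"
  then have "shf n g = shf 0 g" by (rule C_inj)
  then have "\<forall>i. g (i + n) = g i" by (metis add.commute shf_0 shf_app)
  then show False using assms unfolding periodic_seq_def by blast
qed

lemma exists2: assumes np: "\<not> periodic_seq g" shows "\<exists>y\<in>X. card (Pre y) = 2"
proof -
  obtain p N where pN: "p \<ge> 1" "\<forall>i\<ge>N. g (i + p) = g i" using evp unfolding eventually_periodic_seq_def by blast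
  define M where "M = Suc N"
  define u where "u = (\<lambda>n. SOME v. v \<in> verts G \<and> F v = C n)"
  have u: "u n \<in> verts G \<and> F (u n) = C n" for n
  proof -
    have "\<exists>v. v \<in> verts G \<and> F v = C n" using CV by blast
    then show ?thesis unfolding u_def by (rule someI_ex)
  qed
  define ph where "ph = (\<lambda>t. nat (t mod int p))"
  have ph_lt: "ph t < p" for t
  proof -
    have "t mod int p < int p" "0 \<le> t mod int p" using pN(1) by simp_all
    then show ?thesis unfolding ph_def by linarith
  qed
  have ph_succ: "ph (t + 1) = (if ph t + 1 < p then ph t + 1 else 0)" for t
    unfolding ph_def using nat_mod_succ[of p t] pN(1) by simp
  define yB where "yB = (\<lambda>t. g (M + ph t))"
  have per: "shf (M + p) g = shf M g"
  proof
    fix i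
    have "N \<le> M + i" unfolding M_def by simp
    then have "g (M + i + p) = g (M + i)" using pN(2) by blast
    then show "shf (M + p) g i = shf M g i" by (simp add: ac_simps)
  qed
  have Cper: "C (M + p) = C M" unfolding C_def per ..
  define xB where "xB = (\<lambda>t. SOME e. e \<in> edges G \<and> src G e = u (M + ph t) \<and> lab G e = yB t)"
  have xB: "xB t \<in> edges G \<and> src G (xB t) = u (M + ph t) \<and> lab G (xB t) = yB t" for t
  proof -
    have "\<exists>e\<in>edges G. src G e = u (M + ph t) \<and> lab G e = g (M + ph t)"
      using edge_lab[of "u (M + ph t)" "M + ph t" "g (M + ph t)"] u by blast
    then have "\<exists>e. e \<in> edges G \<and> src G e = u (M + ph t) \<and> lab G e = yB t" unfolding yB_def by blast
    then show ?thesis unfolding xB_def by (rule someI_ex)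
  qed
  have tgB: "tgt G (xB t) = src G (xB (t + 1))" for t
  proof -
    have s: "F (src G (xB t)) = C (M + ph t)" using xB u by simp
    have "F (tgt G (xB t)) = C (Suc (M + ph t))"
      using edge_C[OF _ s] xB[of t] unfolding yB_def by auto
    also have "\<dots> = C (M + ph (t + 1))"
    proof (cases "ph t + 1 < p")
      case True then show ?thesis using ph_succ[of t] by simp
    next
      case False
      then have "ph t + 1 = p" using ph_lt[of t] by simp
      then have h: "Suc (M + ph t) = M + p" by simp
      have "ph (t + 1) = 0" using ph_succ[of t] False by simp
      then show ?thesis unfolding h using Cper by simp
    qed
    also have "\<dots> = F (src G (xB (t + 1)))" using xB u by simp
    finally have "F (tgt G (xB t)) = F (src G (xB (t + 1)))" .
    moreover have "tgt G (xB t) \<in> verts G" using src_verts xB by blast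
    moreover have "src G (xB (t + 1)) \<in> verts G" using src_verts xB by blast
    ultimately show ?thesis using F_eq by blast
  qed
  have xBE: "xB \<in> edge_shift G" unfolding edge_shift_def using xB tgB by simp
  have cB: "cover_map G xB = yB" unfolding cover_map_def using xB by simp
  have yX: "yB \<in> X" using xBE cB pres by blast
  have xBPre: "xB \<in> Pre yB" unfolding Pre_def using xBE cB by simp
  have notA: "\<not> typeA xB"
  proof
    assume "typeA xB"
    then obtain t where "Phi xB t = C 0" unfolding typeA_def by blast
    moreover have "Phi xB t = C (M + ph t)" unfolding Phi_def using xB u by simp
    moreover have "C (M + ph t) \<noteq> C 0" using C_ne0[OF np] unfolding M_def by simp
    ultimately show False by simp
  qed
  have yper: "yB (t + int p * j) = yB t" for t j
  proof -
    have "(t + int p * j) mod int p = t mod int p" by simp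
    then show ?thesis unfolding yB_def ph_def by simp
  qed
  define u0 where "u0 = u 0"
  define st where "st = fwd G yB u0"
  define ed where "ed = fed G yB u0"
  have inv: "st n \<in> verts G \<and> F (st n) = FX (win yB 0 n) \<and>
      ed n \<in> edges G \<and> src G (ed n) = st n \<and> lab G (ed n) = yB (int n) \<and> tgt G (ed n) = st (Suc n)" for n
  proof (induction n)
    case 0
    have a: "st 0 \<in> verts G \<and> F (st 0) = FX (win yB 0 0)"
      using u[of 0] unfolding st_def u0_def by (simp add: win_def FX_def C0)
    have "win yB 0 1 \<in> Lang" using win_Lang[OF yX] by blast
    then have "[yB 0] \<in> F (st 0)" using a unfolding FX_def by (simp add: win_def)
    then have "\<exists>e. e \<in> edges G \<and> src G e = st 0 \<and> lab G e = yB (int 0)" using F_single by (metis of_nat_0)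
    then have "ed 0 \<in> edges G \<and> src G (ed 0) = st 0 \<and> lab G (ed 0) = yB (int 0)"
      unfolding ed_def fed_def st_def by (rule someI_ex)
    moreover have "tgt G (ed 0) = st (Suc 0)" unfolding ed_def fed_def st_def by simp
    ultimately show ?case using a by simp
  next
    case (Suc n)
    have e: "ed n \<in> edges G" "src G (ed n) = st n" "lab G (ed n) = yB (int n)" "tgt G (ed n) = st (Suc n)"
      using Suc.IH by auto
    have sv: "st (Suc n) \<in> verts G" using src_verts e by metis
    have "F (st (Suc n)) = {u. yB (int n) # u \<in> F (st n)}"
      using Fderiv[OF rr e(1)] e by simp
    also have "\<dots> = FX (win yB 0 (Suc n))"
      using Suc.IH unfolding FX_def win_Suc_right by simp
    finally have fs: "F (st (Suc n)) = FX (win yB 0 (Suc n))" .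
    have "win yB 0 (Suc (Suc n)) \<in> Lang" using win_Lang[OF yX] by blast
    then have "[yB (int (Suc n))] \<in> F (st (Suc n))" using fs unfolding FX_def
      by (simp add: win_Suc_right[of yB 0 "Suc n"] del: of_nat_Suc)
    then have "\<exists>e. e \<in> edges G \<and> src G e = st (Suc n) \<and> lab G e = yB (int (Suc n))" using F_single by metis
    then have "ed (Suc n) \<in> edges G \<and> src G (ed (Suc n)) = st (Suc n) \<and> lab G (ed (Suc n)) = yB (int (Suc n))"
      unfolding ed_def fed_def st_def by (rule someI_ex)
    moreover have "tgt G (ed (Suc n)) = st (Suc (Suc n))" unfolding ed_def fed_def st_def by simp
    ultimately show ?case using sv fs by simp
  qed
  have F0: "F (st 0) = C 0" using u[of 0] unfolding st_def u0_def by simp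
  have vis: "\<exists>t\<ge>t0. F (st t) = C 0" for t0
  proof (rule ccontr)
    assume "\<not> (\<exists>t\<ge>t0. F (st t) = C 0)"
    then have na: "\<forall>t\<ge>t0. F (st t) \<noteq> C 0" by blast
    define S where "S = {t. t \<le> t0 \<and> F (st t) = C 0}"
    have finS: "finite S" unfolding S_def by simp
    have "0 \<in> S" unfolding S_def using F0 by simp
    then have neS: "S \<noteq> {}" by blast
    define \<tau> where "\<tau> = Max S"
    have tauS: "\<tau> \<in> S" unfolding \<tau>_def using finS neS by (rule Max_in)
    have tau_max: "t \<in> S \<Longrightarrow> t \<le> \<tau>" for t unfolding \<tau>_def using finS by simp
    have nxt: "F (st (Suc (\<tau> + i))) \<noteq> C 0" for i
    proof (cases "Suc (\<tau> + i) \<le> t0")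
      case True
      show ?thesis
      proof
        assume "F (st (Suc (\<tau> + i))) = C 0"
        then have "Suc (\<tau> + i) \<in> S" unfolding S_def using True by simp
        then show False using tau_max by fastforce
      qed
    next
      case False then show ?thesis using na by simp
    qed
    have step: "yB (int (\<tau> + i)) = g i \<and> F (st (Suc (\<tau> + i))) = C (Suc i)" if "F (st (\<tau> + i)) = C i" for i
    proof -
      have e: "ed (\<tau> + i) \<in> edges G" "F (src G (ed (\<tau> + i))) = C i"
        "lab G (ed (\<tau> + i)) = yB (int (\<tau> + i))" "tgt G (ed (\<tau> + i)) = st (Suc (\<tau> + i))"
        using inv[of "\<tau> + i"] that by auto
      from edge_C[OF e(1,2)] nxt[of i] e(3,4) show ?thesis by auto
    qed
    have all: "F (st (\<tau> + i)) = C i" for i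
    proof (induction i)
      case 0 then show ?case using tauS unfolding S_def by simp
    next
      case (Suc i) then show ?case using step by simp
    qed
    have "\<forall>i. g (i + p) = g i"
    proof
      fix i
      have "g (i + p) = yB (int (\<tau> + (i + p)))" using step all by metis
      also have "\<dots> = yB (int (\<tau> + i) + int p * 1)" by (simp add: ac_simps)
      also have "\<dots> = yB (int (\<tau> + i))" by (rule yper)
      also have "\<dots> = g i" using step all by metis
      finally show "g (i + p) = g i" .
    qed
    then show False using np pN(1) unfolding periodic_seq_def by blast
  qed
  define Vis where "Vis = {t. F (st t) = C 0}"
  have infV: "infinite Vis"
  proof
    assume "finite Vis"
    then obtain m where m: "\<forall>n\<in>Vis. n \<le> m" unfolding finite_nat_set_iff_bounded_le by blast
    obtain t where "t \<ge> Suc m" "F (st t) = C 0" using vis by blast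
    then show False using m unfolding Vis_def by fastforce
  qed
  have "\<not> inj_on (\<lambda>t. t mod p) Vis"
  proof
    assume "inj_on (\<lambda>t. t mod p) Vis"
    moreover have "(\<lambda>t. t mod p) ` Vis \<subseteq> {..<p}" using pN(1) by auto
    ultimately have "finite Vis" by (rule inj_on_finite) simp
    with infV show False by simp
  qed
  then obtain t1 t2 where t12: "t1 \<in> Vis" "t2 \<in> Vis" "t1 \<noteq> t2" "t1 mod p = t2 mod p"
    unfolding inj_on_def by blast
  obtain a b where ab: "a \<in> Vis" "b \<in> Vis" "a < b" "a mod p = b mod p"
  proof (cases "t1 < t2")
    case True then show ?thesis using that t12 by blast
  next
    case False then have "t2 < t1" using t12 by simp
    then show ?thesis using that t12 by (metis)
  qed
  have stab: "st a = st b"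
    using F_eq inv[of a] inv[of b] ab unfolding Vis_def by auto
  define L where "L = b - a"
  have L0: "0 < L" unfolding L_def using ab by simp
  have "p dvd L" unfolding L_def using ab mod_eq_dvd_iff_nat[of a b p] by simp
  then obtain c where c: "L = p * c" by (rule dvdE)
  define r where "r = (\<lambda>t. nat ((t - int a) mod int L))"
  have r_lt: "r t < L" for t
  proof -
    have "(t - int a) mod int L < int L" "0 \<le> (t - int a) mod int L" using L0 by simp_all
    then show ?thesis unfolding r_def by linarith
  qed
  have r_succ: "r (t + 1) = (if r t + 1 < L then r t + 1 else 0)" for t
  proof -
    have eq: "t + 1 - int a = t - int a + 1" by simp
    have "r (t + 1) = nat ((t - int a + 1) mod int L)" unfolding r_def eq ..
    also have "\<dots> = (if nat ((t - int a) mod int L) + 1 < L then nat ((t - int a) mod int L) + 1 else 0)"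
      by (rule nat_mod_succ[OF L0])
    finally show ?thesis unfolding r_def .
  qed
  define zA where "zA = (\<lambda>t. ed (a + r t))"
  have tgA: "tgt G (zA t) = src G (zA (t + 1))" for t
  proof -
    have "tgt G (zA t) = st (Suc (a + r t))" unfolding zA_def using inv by simp
    also have "\<dots> = st (a + r (t + 1))"
    proof (cases "r t + 1 < L")
      case True then show ?thesis using r_succ[of t] by simp
    next
      case False
      then have "r t + 1 = L" using r_lt[of t] by simp
      then have "Suc (a + r t) = b" unfolding L_def using ab by simp
      then show ?thesis using r_succ[of t] False stab by simp
    qed
    also have "\<dots> = src G (zA (t + 1))" unfolding zA_def using inv by simp
    finally show ?thesis .
  qed
  have zAE: "zA \<in> edge_shift G" unfolding edge_shift_def zA_def using inv tgA unfolding zA_def by simp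
  have labA: "lab G (zA t) = yB t" for t
  proof -
    have "lab G (zA t) = yB (int (a + r t))" unfolding zA_def using inv by simp
    also have "int (a + r t) = int a + (t - int a) mod int L" unfolding r_def using L0 by simp
    also have "\<dots> = t - (t - int a) div int L * int L" using minus_div_mult_eq_mod[of "t - int a" "int L"] by linarith
    also have "\<dots> = t + int p * (- (int c * ((t - int a) div int L)))" unfolding c by (simp add: algebra_simps)
    also have "yB \<dots> = yB t" by (rule yper)
    finally show ?thesis .
  qed
  have cA: "cover_map G zA = yB" unfolding cover_map_def using labA by simp
  have zAPre: "zA \<in> Pre yB" unfolding Pre_def using zAE cA by simp
  have isA: "typeA zA" unfolding typeA_def
  proof
    fix T
    define k where "k = \<bar>T\<bar> + int a + 1"
    define t where "t = int a - int L * k"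
    have k0: "0 \<le> k" unfolding k_def by simp
    have "1 \<le> int L" using L0 by simp
    then have "1 * k \<le> int L * k" using k0 by (rule mult_right_mono)
    then have m: "k \<le> int L * k" by simp
    have "- T \<le> \<bar>T\<bar>" by simp
    then have tT: "t \<le> T" using m unfolding t_def k_def by linarith
    have "(t - int a) mod int L = 0" unfolding t_def by simp
    then have "r t = 0" unfolding r_def by simp
    then have "Phi zA t = F (st a)" unfolding Phi_def zA_def using inv by simp
    also have "\<dots> = C 0" using ab(1) unfolding Vis_def by simp
    finally show "\<exists>t\<le>T. Phi zA t = C 0" using tT by blast
  qed
  have ne: "zA \<noteq> xB" using isA notA by blast
  have "{zA, xB} \<subseteq> Pre yB" using zAPre xBPre by simp
  then have "card {zA, xB} \<le> card (Pre yB)" using le2[of yB] by (simp add: card_mono)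
  then have "2 \<le> card (Pre yB)" using ne by simp
  then have "card (Pre yB) = 2" using le2[of yB] by simp
  then show ?thesis using yX by blast
qed

lemma main: "(periodic_seq g \<longrightarrow> one_to_one G) \<and> (\<not> periodic_seq g \<longrightarrow> two_to_one G X)"
proof (intro conjI impI)
  assume "periodic_seq g" then show "one_to_one G" by (rule periodic_one)
next
  assume np: "\<not> periodic_seq g"
  have e: "{x \<in> edge_shift G. cover_map G x = y} = Pre y" for y unfolding Pre_def by simp
  show "two_to_one G X" unfolding two_to_one_def e using le2 exists2[OF np] by blast
qed

end

primrec orb :: "real \<Rightarrow> real \<Rightarrow> nat \<Rightarrow> real" where
  "orb b x 0 = x"
| "orb b x (Suc n) = frac (b * orb b x n)"

definition dig :: "real \<Rightarrow> real \<Rightarrow> nat \<Rightarrow> int" where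
  "dig b x n = \<lfloor>b * orb b x n\<rfloor>"

lemma beta_r_orb: "beta_r b n = orb b 1 (Suc n)"
  by (induction n) auto

lemma beta_e_dig: "beta_e b n = nat (dig b 1 n)"
  by (cases n) (auto simp: dig_def beta_r_orb)

lemma orb_shift: "orb b (orb b x m) i = orb b x (m + i)"
  by (induction i) auto

lemma dig_shift: "dig b (orb b x m) i = dig b x (m + i)"
  unfolding dig_def orb_shift ..

lemma orb_range: "0 \<le> x \<Longrightarrow> 0 \<le> orb b x n"
  by (cases n) auto

lemma orb_lt1: "orb b x (Suc n) < 1"
  by (simp add: frac_lt_1)

lemma dig_nonneg: "0 \<le> x \<Longrightarrow> 0 < b \<Longrightarrow> 0 \<le> dig b x n"
  unfolding dig_def using orb_range[of x b n] by simp

lemma orb_diff: assumes "\<forall>i<n. dig b x i = dig b y i"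
  shows "orb b y n - orb b x n = b ^ n * (y - x)"
  using assms
proof (induction n)
  case 0 then show ?case by simp
next
  case (Suc n)
  then have IH: "orb b y n - orb b x n = b ^ n * (y - x)" by simp
  have d: "\<lfloor>b * orb b x n\<rfloor> = \<lfloor>b * orb b y n\<rfloor>" using Suc.prems unfolding dig_def by simp
  have "orb b y (Suc n) - orb b x (Suc n) = (b * orb b y n - of_int \<lfloor>b * orb b y n\<rfloor>) - (b * orb b x n - of_int \<lfloor>b * orb b x n\<rfloor>)"
    by (simp add: frac_def)
  also have "\<dots> = b * (orb b y n - orb b x n)" using d by (simp add: algebra_simps)
  also have "\<dots> = b ^ Suc n * (y - x)" using IH by simp
  finally show ?case .
qed

lemma dig_less: assumes b: "1 < b" and x: "0 \<le> x" and xy: "x < y" and y: "y \<le> 1"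
  shows "\<exists>n. (\<forall>i<n. dig b x i = dig b y i) \<and> dig b x n < dig b y n"
proof (rule ccontr)
  assume na: "\<not> ?thesis"
  have alleq: "\<forall>i<n. dig b x i = dig b y i" for n
  proof (induction n)
    case 0 then show ?case by simp
  next
    case (Suc n)
    have "orb b y n - orb b x n = b ^ n * (y - x)" using orb_diff[OF Suc.IH] .
    moreover have "0 < b ^ n * (y - x)" using b xy by simp
    ultimately have "orb b x n < orb b y n" by simp
    then have "b * orb b x n \<le> b * orb b y n" using b by simp
    then have "dig b x n \<le> dig b y n" unfolding dig_def by (rule floor_mono)
    moreover have "\<not> dig b x n < dig b y n" using na Suc.IH by blast
    ultimately have "dig b x n = dig b y n" by simp
    then show ?case using Suc.IH less_Suc_eq by auto
  qed
  obtain n where n: "1 / (y - x) < b ^ n" using real_arch_pow[OF b] by blast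
  have "1 / (y - x) < b ^ Suc n"
  proof -
    have "b ^ n \<le> b ^ Suc n" using b by simp
    then show ?thesis using n by simp
  qed
  then have h1: "1 < b ^ Suc n * (y - x)" using xy by (simp add: field_simps)
  have h2: "orb b y (Suc n) - orb b x (Suc n) = b ^ Suc n * (y - x)" by (rule orb_diff[OF alleq])
  have h3: "orb b y (Suc n) < 1" by (rule orb_lt1)
  have h4: "0 \<le> orb b x (Suc n)" by (rule orb_range[OF x])
  show False using h1 h2 h3 h4 by linarith
qed

lemma e_lex: assumes b: "1 < b" and m: "1 \<le> m"
  shows "\<exists>n. (\<forall>i<n. beta_e b (m + i) = beta_e b i) \<and> beta_e b (m + n) < beta_e b n"
proof -
  obtain m' where m': "m = Suc m'" using m by (cases m) auto
  define x where "x = orb b 1 m"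
  have x0: "0 \<le> x" unfolding x_def by (simp add: orb_range)
  have x1: "x < 1" unfolding x_def m' by (rule orb_lt1)
  obtain n where n: "\<forall>i<n. dig b x i = dig b 1 i" "dig b x n < dig b 1 n"
    using dig_less[OF b x0 x1] by auto
  have dx: "dig b x i = dig b 1 (m + i)" for i unfolding x_def by (rule dig_shift)
  have nn: "0 \<le> dig b x i" for i using dig_nonneg[OF x0] b by simp
  show ?thesis
  proof (intro exI[of _ n] conjI allI impI)
    fix i assume "i < n"
    then show "beta_e b (m + i) = beta_e b i" using n(1) dx unfolding beta_e_dig by metis
  next
    show "beta_e b (m + n) < beta_e b n" using n(2) dx[of n] nn[of n] unfolding beta_e_dig by simp
  qed
qed

lemma frac0_e: assumes "frac b = 0" shows "beta_e b (Suc n) = 0"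
proof -
  have "beta_r b n = 0" for n using assms by (induction n) auto
  then show ?thesis by simp
qed

lemma fracpos_e: assumes b: "1 < b" and f: "0 < frac b" shows "\<exists>n. beta_e b (Suc n) \<noteq> 0"
proof (rule ccontr)
  assume "\<not> ?thesis"
  then have z: "\<And>n. beta_e b (Suc n) = 0" by blast
  have r0: "0 \<le> beta_r b n" for n by (cases n) auto
  have lt: "b * beta_r b n < 1" for n
  proof -
    have "nat \<lfloor>b * beta_r b n\<rfloor> = 0" using z[of n] by simp
    then have "\<lfloor>b * beta_r b n\<rfloor> \<le> 0" by simp
    then show ?thesis by linarith
  qed
  have pw: "beta_r b n = b ^ n * frac b" for n
  proof (induction n)
    case 0 then show ?case by simp
  next
    case (Suc n)
    have "0 \<le> b * beta_r b n" using b r0[of n] by simp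
    then have "beta_r b (Suc n) = b * beta_r b n" using lt[of n] by (simp add: frac_eq)
    then show ?case using Suc.IH by simp
  qed
  obtain n where n: "1 / frac b < b ^ n" using real_arch_pow[OF b] by blast
  then have "1 < b ^ n * frac b" using f by (simp add: field_simps)
  moreover have "beta_r b n < 1" by (cases n) (simp_all only: beta_r.simps frac_lt_1)
  ultimately show False using pw by simp
qed

lemma aux_nat: assumes "(1::int) \<le> f" "f \<le> c" shows "int (nat f - 1) < c"
proof -
  have h: "1 \<le> nat f" using assms by simp
  have "int (nat f - 1) = int (nat f) - int 1" by (rule of_nat_diff[OF h])
  also have "int (nat f) = f" using assms by simp
  finally show ?thesis using assms by simp
qed

lemma gen_seq_props:
  fixes b :: real
  assumes b: "1 < b"
  shows "(\<forall>m. lex_le (shf m (gen_seq b)) (gen_seq b)) \<and> (\<forall>n. \<exists>j\<ge>n. 0 < gen_seq b j)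
       \<and> int (gen_seq b 0) < \<lceil>b\<rceil>"
proof -
  define e where "e = beta_e b"
  have fl: "1 \<le> \<lfloor>b\<rfloor>" unfolding le_floor_iff using b by simp
  have flc: "\<lfloor>b\<rfloor> \<le> \<lceil>b\<rceil>" by (meson floor_le_ceiling)
  have fpos_lt: "\<lfloor>b\<rfloor> < \<lceil>b\<rceil>" if "0 < frac b"
  proof -
    have "of_int \<lfloor>b\<rfloor> < b" using that unfolding frac_def by simp
    also have "b \<le> of_int \<lceil>b\<rceil>" by (rule le_of_int_ceiling)
    finally show ?thesis by simp
  qed
  show ?thesis
  proof (cases "infinite {n. e n \<noteq> 0}")
    case True
    then have g: "gen_seq b = e" unfolding gen_seq_def e_def by simp
    have parry: "lex_le (shf m e) e" for m
    proof (cases "m = 0")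
      case True then show ?thesis by simp
    next
      case False
      then obtain n where n: "\<forall>i<n. e (m + i) = e i" "e (m + n) < e n"
        using e_lex[OF b, of m] unfolding e_def by auto
      then show ?thesis unfolding lex_le_def by (intro disjI2 exI[of _ n]) auto
    qed
    have nz: "\<exists>j\<ge>n. 0 < e j" for n
    proof (rule ccontr)
      assume "\<not> ?thesis"
      then have "{n. e n \<noteq> 0} \<subseteq> {..<n}" by (auto simp: not_le)
      then show False using True finite_subset by blast
    qed
    have "0 < frac b"
    proof (rule ccontr)
      assume "\<not> 0 < frac b"
      then have "frac b = 0" using frac_ge_0[of b] by linarith
      then have "{n. e n \<noteq> 0} \<subseteq> {0}"
      proof (intro subsetI)
        fix n assume "n \<in> {n. e n \<noteq> 0}"
        then show "n \<in> {0}" using frac0_e[OF \<open>frac b = 0\<close>] unfolding e_def by (cases n) (simp_all del: beta_e.simps)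
      qed
      then show False using True finite_subset by blast
    qed
    then have "int (e 0) < \<lceil>b\<rceil>" unfolding e_def using fpos_lt fl by simp
    then show ?thesis using g parry nz by simp
  next
    case False
    then have finE: "finite {n. e n \<noteq> 0}" by simp
    define K where "K = Max {n. e n \<noteq> 0}"
    have e0': "e 0 \<noteq> 0" unfolding e_def using fl by simp
    have KE: "e K \<noteq> 0" unfolding K_def using finE e0' by (metis (mono_tags) Max_in empty_iff mem_Collect_eq)
    have Kmax: "n > K \<Longrightarrow> e n = 0" for n unfolding K_def using finE by (metis (mono_tags) Max_ge mem_Collect_eq not_le)
    define gg where "gg = (\<lambda>n. if n mod Suc K = K then e K - 1 else e (n mod Suc K))"
    have nf: "\<not> infinite {n. beta_e b n \<noteq> 0}" using False unfolding e_def .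
    have g: "gen_seq b = gg" unfolding gen_seq_def if_not_P[OF nf] Let_def gg_def K_def e_def by (rule refl)
    have ggper: "gg (n + j * Suc K) = gg n" for n j
    proof -
      have m: "(n + j * Suc K) mod Suc K = n mod Suc K" by (rule mod_mult_self1)
      show ?thesis unfolding gg_def m by (rule refl)
    qed
    have ggsmall: "gg n = e n" if "n < K" for n unfolding gg_def using that by simp
    have ggK: "gg K = e K - 1" unfolding gg_def by simp
    have shf_red: "shf m gg = shf (m mod Suc K) gg" for m
    proof
      fix i
      have eq: "m + i = (m mod Suc K + i) + m div Suc K * Suc K"
        using mod_div_mult_eq[of m "Suc K"] by linarith
      show "shf m gg i = shf (m mod Suc K) gg i" unfolding shf_app eq ggper ..
    qed
    have parry: "lex_le (shf m gg) gg" for m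
    proof (cases "m mod Suc K = 0")
      case True then show ?thesis using shf_red[of m] by simp
    next
      case False
      define m' where "m' = m mod Suc K"
      have m'1: "1 \<le> m'" "m' \<le> K" unfolding m'_def using False by (auto simp: less_Suc_eq_le)
      obtain j where j: "\<forall>i<j. e (m' + i) = e i" "e (m' + j) < e j"
        using e_lex[OF b m'1(1)] unfolding e_def by auto
      define w where "w = min j (K - m')"
      have below: "shf m' gg i = gg i" if "i < w" for i
      proof -
        have "i < j" "m' + i < K" "i < K" using that m'1 unfolding w_def by auto
        then show ?thesis using j(1) ggsmall by simp
      qed
      have at: "shf m' gg w < gg w"
      proof (cases "j < K - m'")
        case True
        then have "w = j" "m' + j < K" "j < K" unfolding w_def by auto
        then show ?thesis using j(2) ggsmall by simp
      next
        case F: False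
        then have w: "w = K - m'" unfolding w_def by simp
        have kk: "m' + (K - m') = K" "K - m' < K" using m'1 by auto
        have "e K \<le> e (K - m')"
        proof (cases "j = K - m'")
          case True then show ?thesis using j(2) kk by simp
        next
          case False then have "K - m' < j" using F by simp
          then show ?thesis using j(1) kk by (metis order.refl)
        qed
        then have "e K - 1 < e (K - m')" using KE by simp
        then show ?thesis unfolding w using kk ggK ggsmall by simp
      qed
      have "lex_le (shf m' gg) gg" unfolding lex_le_def using below at by blast
      then show ?thesis using shf_red[of m] unfolding m'_def by simp
    qed
    have gg0: "0 < gg 0"
    proof (cases "K = 0")
      case False then show ?thesis using ggsmall[of 0] e0' by simp
    next
      case True
      have "\<not> 0 < frac b"
      proof
        assume "0 < frac b"
        then obtain n where "e (Suc n) \<noteq> 0" using fracpos_e[OF b] unfolding e_def by blast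
        then show False using Kmax True by simp
      qed
      then have "frac b = 0" using frac_ge_0[of b] by linarith
      then have "b = of_int \<lfloor>b\<rfloor>" unfolding frac_def by simp
      then have fb2: "2 \<le> \<lfloor>b\<rfloor>" using b by linarith
      have "2 \<le> e 0" unfolding e_def beta_e.simps by (insert fb2) (subst le_nat_iff; linarith)
      then show ?thesis using ggK True by simp
    qed
    have nz: "\<exists>j\<ge>n. 0 < gg j" for n
    proof (intro exI[of _ "n * Suc K"] conjI)
      show "n \<le> n * Suc K" by simp
      show "0 < gg (n * Suc K)" using ggper[of 0 n] gg0 by simp
    qed
    have alpha: "int (gg 0) < \<lceil>b\<rceil>"
    proof (cases "K = 0")
      case True
      then have "gg 0 = e 0 - 1" using ggK by simp
      then show ?thesis unfolding e_def beta_e.simps using aux_nat[OF fl flc] by simp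
    next
      case False
      have "0 < frac b"
      proof (rule ccontr)
        assume "\<not> 0 < frac b"
        then have "frac b = 0" using frac_ge_0[of b] by linarith
        then have "e K = 0" using frac0_e[of b "K - 1"] False unfolding e_def by simp
        then show False using KE by simp
      qed
      then show ?thesis using ggsmall[of 0] False fpos_lt fl unfolding e_def by simp
    qed
    show ?thesis using g parry nz alpha by simp
  qed
qed


theorem proposition3p3:
  fixes \<beta> :: real and G :: lgraph
  assumes "\<beta> > 1"
    and "eventually_periodic_seq (gen_seq \<beta>)"
    and "right_fischer_cover (beta_shift \<beta>) G"
  shows "(periodic_seq (gen_seq \<beta>) \<longrightarrow> one_to_one G) \<and>
         (\<not> periodic_seq (gen_seq \<beta>) \<longrightarrow> two_to_one G (beta_shift \<beta>))"
proof -
  have props: "(\<forall>m. lex_le (shf m (gen_seq \<beta>)) (gen_seq \<beta>)) \<and> (\<forall>n. \<exists>j\<ge>n. 0 < gen_seq \<beta> j)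
       \<and> int (gen_seq \<beta> 0) < \<lceil>\<beta>\<rceil>" by (rule gen_seq_props[OF assms(1)])
  have Xeq: "beta_shift \<beta> = {y. \<forall>k. lex_le (ray y k) (gen_seq \<beta>)}"
  proof (intro set_eqI iffI)
    fix y assume "y \<in> beta_shift \<beta>"
    then show "y \<in> {y. \<forall>k. lex_le (ray y k) (gen_seq \<beta>)}" unfolding beta_shift_def ray_def by simp
  next
    fix y assume h: "y \<in> {y. \<forall>k. lex_le (ray y k) (gen_seq \<beta>)}"
    have "int (y k) < \<lceil>\<beta>\<rceil>" for k
    proof -
      have "lex_le (ray y k) (gen_seq \<beta>)" using h by simp
      then have "ray y k 0 < gen_seq \<beta> 0 \<or> ray y k 0 = gen_seq \<beta> 0"
        using lex_le_Cons[THEN iffD1] by blast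
      then have "ray y k 0 \<le> gen_seq \<beta> 0" by auto
      then have "y k \<le> gen_seq \<beta> 0" unfolding ray_def by simp
      then show ?thesis using props by linarith
    qed
    then show "y \<in> beta_shift \<beta>" using h unfolding beta_shift_def ray_def by simp
  qed
  interpret bsh "gen_seq \<beta>" G "beta_shift \<beta>"
  proof
    show "\<And>m. lex_le (shf m (gen_seq \<beta>)) (gen_seq \<beta>)" using props by blast
    show "\<And>n. \<exists>j\<ge>n. 0 < gen_seq \<beta> j" using props by blast
    show "eventually_periodic_seq (gen_seq \<beta>)" by (rule assms(2))
    show "beta_shift \<beta> = {y. \<forall>k. lex_le (ray y k) (gen_seq \<beta>)}" by (rule Xeq)
    show "right_fischer_cover (beta_shift \<beta>) G" by (rule assms(3))
  qed
  show ?thesis by (rule main)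
qed

end
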